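(* Let $\mathcal{H}$ be a Hilbert space, let $C\in\mathcal{B}(\mathcal{H})$ be similar to a contraction, and let $E\in\mathcal{B}(\mathcal{H})$ have spectral radius $r(E)<1$ and satisfy $EC=0$. Then $T=C+E$ is similar to a contraction.
   Context: An operator $T$ is a zero-product perturbation of $C$ by $E$ if $T=C+E$ and $EC=0$. An operator $R\in\mathcal{B}(\mathcal{H})$ is similar to a contraction if there is an invertible $L\in\mathcal{B}(\mathcal{H})$ with $\|L^{-1}RL\|\le 1$. *)

theory Defs
  imports "HOL-Analysis.Analysis"
begin

text \<open>A complex Hilbert space: a real Hilbert space (real_inner + complete_space,
  the real inner product being the real part of the complex one) equipped with a
  complex scalar multiplication extending the real one, for which multiplication
  by the imaginary unit is isometric. Every complex Hilbert space arises this way.\<close>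

class complex_hilbert = real_inner + complete_space +
  fixes scaleC :: "complex \<Rightarrow> 'a \<Rightarrow> 'a" (infixr "*\<^sub>C" 75)
  assumes scaleC_add_right: "a *\<^sub>C (x + y) = a *\<^sub>C x + a *\<^sub>C y"
    and scaleC_add_left: "(a + b) *\<^sub>C x = a *\<^sub>C x + b *\<^sub>C x"
    and scaleC_scaleC: "a *\<^sub>C (b *\<^sub>C x) = (a * b) *\<^sub>C x"
    and scaleC_of_real: "complex_of_real r *\<^sub>C x = r *\<^sub>R x"
    and norm_scaleC_ii: "norm (\<i> *\<^sub>C x) = norm x"

definition bop :: "('a::complex_hilbert \<Rightarrow>\<^sub>L 'a) set" where
  "bop = {A. \<forall>c x. blinfun_apply A (c *\<^sub>C x) = c *\<^sub>C blinfun_apply A x}"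

definition invertible_bop :: "('a::complex_hilbert \<Rightarrow>\<^sub>L 'a) \<Rightarrow> bool" where
  "invertible_bop L \<longleftrightarrow> L \<in> bop \<and>
     (\<exists>M\<in>bop. M o\<^sub>L L = id_blinfun \<and> L o\<^sub>L M = id_blinfun)"

definition similar_to_contraction :: "('a::complex_hilbert \<Rightarrow>\<^sub>L 'a) \<Rightarrow> bool" where
  "similar_to_contraction R \<longleftrightarrow>
     (\<exists>L M. invertible_bop L \<and> M \<in> bop \<and> M o\<^sub>L L = id_blinfun \<and> L o\<^sub>L M = id_blinfun
        \<and> norm (M o\<^sub>L R o\<^sub>L L) \<le> 1)"

definition bop_spectrum :: "('a::complex_hilbert \<Rightarrow>\<^sub>L 'a) \<Rightarrow> complex set" where
  "bop_spectrum E = {z. \<not> (\<exists>M\<in>bop. \<forall>x.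
      blinfun_apply M (blinfun_apply E x - z *\<^sub>C x) = x \<and>
      blinfun_apply E (blinfun_apply M x) - z *\<^sub>C blinfun_apply M x = x)}"

definition spectral_radius :: "('a::complex_hilbert \<Rightarrow>\<^sub>L 'a) \<Rightarrow> real" where
  "spectral_radius E = Sup (cmod ` bop_spectrum E)"

end

theory Submission
  imports Defs "HOL-Complex_Analysis.Complex_Analysis" "HOL-Computational_Algebra.Formal_Power_Series"
begin

definition J :: "'a::complex_hilbert \<Rightarrow> 'a" where "J x = \<i> *\<^sub>C x"

lemma scaleC_real: fixes x y :: "'a::complex_hilbert" shows "complex_of_real r *\<^sub>C x = r *\<^sub>R x" by (rule scaleC_of_real)

lemma scaleC_zero_right[simp]: fixes x y :: "'a::complex_hilbert" shows "c *\<^sub>C 0 = 0"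
  by (metis add_cancel_right_right scaleC_add_right)

lemma scaleC_one[simp]: fixes x y :: "'a::complex_hilbert" shows "1 *\<^sub>C x = x"
  using scaleC_of_real[of 1 x] by simp

lemma scaleC_zero_left[simp]: fixes x y :: "'a::complex_hilbert" shows "0 *\<^sub>C x = 0"
  using scaleC_of_real[of 0 x] by simp

lemma scaleC_minus_right: fixes x y :: "'a::complex_hilbert" shows "c *\<^sub>C (- x) = - (c *\<^sub>C x)"
  by (metis add_eq_0_iff scaleC_add_right scaleC_zero_right)

lemma scaleC_diff_right: fixes x y :: "'a::complex_hilbert" shows "c *\<^sub>C (x - y) = c *\<^sub>C x - c *\<^sub>C y"
  by (metis diff_conv_add_uminus scaleC_add_right scaleC_minus_right)

lemma scaleC_scaleR_comm: fixes x y :: "'a::complex_hilbert" shows "c *\<^sub>C (r *\<^sub>R x) = r *\<^sub>R (c *\<^sub>C x)"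
  by (metis scaleC_of_real scaleC_scaleC mult.commute)

lemma J_add: fixes x y :: "'a::complex_hilbert" shows "J (x + y) = J x + J y" by (simp add: J_def scaleC_add_right)
lemma J_scaleR: fixes x y :: "'a::complex_hilbert" shows "J (r *\<^sub>R x) = r *\<^sub>R J x" by (simp add: J_def scaleC_scaleR_comm)
lemma linear_J: "linear (J::'a::complex_hilbert \<Rightarrow> 'a)"
  by (rule linearI) (simp_all add: J_add J_scaleR)
lemma norm_J[simp]: fixes x y :: "'a::complex_hilbert" shows "norm (J x) = norm x" by (simp add: J_def norm_scaleC_ii)
lemma bounded_linear_J: "bounded_linear (J::'a::complex_hilbert \<Rightarrow> 'a)"
  by (rule bounded_linear_intro[where K=1]) (simp_all add: J_add J_scaleR)
lemma J_J[simp]: fixes x y :: "'a::complex_hilbert" shows "J (J x) = - x"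
proof -
  have "J (J x) = (\<i> * \<i>) *\<^sub>C x" by (simp add: J_def scaleC_scaleC)
  also have "\<i> * \<i> = complex_of_real (-1)" by simp
  finally show ?thesis by (simp only: scaleC_of_real) simp
qed
lemma J_minus: fixes x y :: "'a::complex_hilbert" shows "J (- x) = - J x" by (simp add: J_def scaleC_minus_right)
lemma J_diff: fixes x y :: "'a::complex_hilbert" shows "J (x - y) = J x - J y" by (simp add: J_def scaleC_diff_right)

lemma inner_J_J[simp]: fixes x y :: "'a::complex_hilbert" shows "inner (J x) (J y) = inner x y"
proof -
  have "inner (J x) (J y) = (norm (J x + J y)^2 - norm (J x)^2 - norm (J y)^2)/2"
    by (simp add: dot_norm)
  also have "\<dots> = (norm (x + y)^2 - norm x^2 - norm y^2)/2"
    by (simp flip: J_add)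
  finally show ?thesis by (simp add: dot_norm)
qed

lemma inner_J_left: fixes x y :: "'a::complex_hilbert" shows "inner (J x) y = - inner x (J y)"
proof -
  have "inner (J x) y = inner (J (J x)) (J y)" by (rule inner_J_J[symmetric])
  also have "\<dots> = inner (-x) (J y)" by (simp only: J_J)
  finally show ?thesis by simp
qed

lemma inner_J_self[simp]: fixes x y :: "'a::complex_hilbert" shows "inner (J x) x = 0"
  using inner_J_left[of x x] by (simp add: inner_commute)

lemma scaleC_decomp: fixes x y :: "'a::complex_hilbert" shows "c *\<^sub>C x = Re c *\<^sub>R x + Im c *\<^sub>R J x"
proof -
  have "c = complex_of_real (Re c) + complex_of_real (Im c) * \<i>"
    by (simp add: complex_eq_iff)
  hence "c *\<^sub>C x = complex_of_real (Re c) *\<^sub>C x + complex_of_real (Im c) *\<^sub>C (\<i> *\<^sub>C x)"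
    by (metis scaleC_add_left scaleC_scaleC)
  thus ?thesis by (simp add: scaleC_of_real J_def)
qed

lemma norm_scaleC: fixes x y :: "'a::complex_hilbert" shows "norm (c *\<^sub>C x) = cmod c * norm x"
proof -
  define a b where "a = Re c" "b = Im c"
  have "(norm (c *\<^sub>C x))^2 = inner (a *\<^sub>R x + b *\<^sub>R J x) (a *\<^sub>R x + b *\<^sub>R J x)"
    by (simp add: scaleC_decomp a_b_def dot_square_norm)
  also have "\<dots> = a*a*inner x x + b*b*inner (J x) (J x) + 2*a*b*inner (J x) x"
    by (simp add: inner_add_left inner_add_right inner_commute[of x "J x"] algebra_simps)
  also have "\<dots> = (a^2 + b^2) * (norm x)^2" by (simp add: dot_square_norm power2_eq_square algebra_simps)
  also have "\<dots> = (cmod c * norm x)^2" by (simp add: cmod_def power_mult_distrib a_b_def)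
  finally show ?thesis by (simp add: power2_eq_iff_nonneg)
qed

lemma bounded_linear_scaleC: fixes x y :: "'a::complex_hilbert" shows "bounded_linear (\<lambda>x. c *\<^sub>C x)"
  by (rule bounded_linear_intro[where K="cmod c"]) (simp_all add: scaleC_add_right scaleC_scaleR_comm norm_scaleC)

section \<open>Powers and Neumann series\<close>

lemma bc_assoc: "(A o\<^sub>L B) o\<^sub>L C = A o\<^sub>L (B o\<^sub>L C)"
  by (rule blinfun_eqI) simp
lemma bc_id_left[simp]: "id_blinfun o\<^sub>L A = A"
  by (rule blinfun_eqI) simp
lemma bc_id_right[simp]: "A o\<^sub>L id_blinfun = A"
  by (rule blinfun_eqI) simp
lemmas bc_bil = bounded_bilinear_blinfun_compose
lemma bc_diff_left: "(A - B) o\<^sub>L C = (A o\<^sub>L C) - (B o\<^sub>L C)"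
  by (rule bounded_bilinear.diff_left[OF bc_bil])
lemma bc_diff_right: "C o\<^sub>L (A - B) = (C o\<^sub>L A) - (C o\<^sub>L B)"
  by (rule bounded_bilinear.diff_right[OF bc_bil])
lemma bc_add_left: "(A + B) o\<^sub>L C = (A o\<^sub>L C) + (B o\<^sub>L C)"
  by (rule bounded_bilinear.add_left[OF bc_bil])
lemma bc_add_right: "C o\<^sub>L (A + B) = (C o\<^sub>L A) + (C o\<^sub>L B)"
  by (rule bounded_bilinear.add_right[OF bc_bil])
lemma bc_sum_left: "(\<Sum>i\<in>S. f i) o\<^sub>L C = (\<Sum>i\<in>S. f i o\<^sub>L C)"
  by (rule bounded_bilinear.sum_left[OF bc_bil])
lemma bc_sum_right: "C o\<^sub>L (\<Sum>i\<in>S. f i) = (\<Sum>i\<in>S. C o\<^sub>L f i)"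
  by (rule bounded_bilinear.sum_right[OF bc_bil])
lemma bc_scaleR_left: "(r *\<^sub>R A) o\<^sub>L C = r *\<^sub>R (A o\<^sub>L C)"
  by (rule bounded_bilinear.scaleR_left[OF bc_bil])
lemma bc_scaleR_right: "C o\<^sub>L (r *\<^sub>R A) = r *\<^sub>R (C o\<^sub>L A)"
  by (rule bounded_bilinear.scaleR_right[OF bc_bil])

fun bpow :: "('a::real_normed_vector \<Rightarrow>\<^sub>L 'a) \<Rightarrow> nat \<Rightarrow> ('a \<Rightarrow>\<^sub>L 'a)" where
  "bpow A 0 = id_blinfun"
| "bpow A (Suc n) = A o\<^sub>L bpow A n"

lemma bpow_apply_Suc': "blinfun_apply (bpow A (Suc n)) x = blinfun_apply (bpow A n) (blinfun_apply A x)"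
  by (induction n arbitrary: x) simp_all

lemma bpow_Suc': "bpow A (Suc n) = bpow A n o\<^sub>L A"
  by (rule blinfun_eqI) (simp only: bpow_apply_Suc' blinfun_apply_blinfun_compose)

lemma bpow_add: "bpow A (m + n) = bpow A m o\<^sub>L bpow A n"
  by (induction m) (simp_all add: bc_assoc)

lemma norm_bpow: "norm (bpow A n) \<le> norm A ^ n"
proof (induction n)
  case 0
  show ?case by (simp add: norm_blinfun_id_le)
next
  case (Suc n)
  have "norm (bpow A (Suc n)) \<le> norm A * norm (bpow A n)"
    by (simp add: norm_blinfun_compose)
  also have "\<dots> \<le> norm A * norm A ^ n" using Suc by (simp add: mult_left_mono)
  finally show ?case by simp
qed

lemma bpow_commute: "A o\<^sub>L bpow A n = bpow A n o\<^sub>L A"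
  by (metis bpow.simps(2) bpow_Suc')

lemma summable_bpow:
  fixes A :: "'a::banach \<Rightarrow>\<^sub>L 'a"
  assumes "norm A < 1"
  shows "summable (\<lambda>n. norm (bpow A n))"
  by (rule summable_comparison_test[OF _ summable_geometric[of "norm A"]])
     (use assms norm_bpow in auto)

lemma neumann:
  fixes A :: "'a::banach \<Rightarrow>\<^sub>L 'a"
  assumes "norm A < 1"
  shows "(id_blinfun - A) o\<^sub>L (\<Sum>n. bpow A n) = id_blinfun"
    and "(\<Sum>n. bpow A n) o\<^sub>L (id_blinfun - A) = id_blinfun"
proof -
  have sm: "summable (bpow A)" using summable_bpow[OF assms] by (rule summable_norm_cancel)
  have tel: "(\<Sum>n<N. bpow A n) o\<^sub>L (id_blinfun - A) = id_blinfun - bpow A N"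
       "(id_blinfun - A) o\<^sub>L (\<Sum>n<N. bpow A n) = id_blinfun - bpow A N" for N
  proof -
    have "(\<Sum>n<N. bpow A n) o\<^sub>L (id_blinfun - A) = (\<Sum>n<N. bpow A n - bpow A (Suc n))"
      by (simp add: bc_sum_left bc_diff_right sum_subtractf bpow_commute)
    also have "\<dots> = id_blinfun - bpow A N"
      by (subst sum_lessThan_telescope') simp
    finally show "(\<Sum>n<N. bpow A n) o\<^sub>L (id_blinfun - A) = id_blinfun - bpow A N" .
    have "(id_blinfun - A) o\<^sub>L (\<Sum>n<N. bpow A n) = (\<Sum>n<N. bpow A n - bpow A (Suc n))"
      by (simp add: bc_diff_left bc_sum_right)
    also have "\<dots> = id_blinfun - bpow A N"
      by (subst sum_lessThan_telescope') simp
    finally show "(id_blinfun - A) o\<^sub>L (\<Sum>n<N. bpow A n) = id_blinfun - bpow A N" .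
  qed
  have z: "(\<lambda>N. bpow A N) \<longlonglongrightarrow> 0"
    using sm by (rule summable_LIMSEQ_zero)
  have l: "(\<lambda>N. \<Sum>n<N. bpow A n) \<longlonglongrightarrow> (\<Sum>n. bpow A n)"
    using sm by (rule summable_LIMSEQ)
  have "(\<lambda>N. (\<Sum>n<N. bpow A n) o\<^sub>L (id_blinfun - A)) \<longlonglongrightarrow> ((\<Sum>n. bpow A n) o\<^sub>L (id_blinfun - A))"
    by (rule bounded_bilinear.tendsto[OF bounded_bilinear_blinfun_compose l tendsto_const])
  moreover have "(\<lambda>N. (\<Sum>n<N. bpow A n) o\<^sub>L (id_blinfun - A)) \<longlonglongrightarrow> id_blinfun - 0"
    unfolding tel by (intro tendsto_intros z)
  ultimately show "(\<Sum>n. bpow A n) o\<^sub>L (id_blinfun - A) = id_blinfun"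
    using LIMSEQ_unique by fastforce
  have "(\<lambda>N. (id_blinfun - A) o\<^sub>L (\<Sum>n<N. bpow A n)) \<longlonglongrightarrow> ((id_blinfun - A) o\<^sub>L (\<Sum>n. bpow A n))"
    by (rule bounded_bilinear.tendsto[OF bounded_bilinear_blinfun_compose tendsto_const l])
  moreover have "(\<lambda>N. (id_blinfun - A) o\<^sub>L (\<Sum>n<N. bpow A n)) \<longlonglongrightarrow> id_blinfun - 0"
    unfolding tel by (intro tendsto_intros z)
  ultimately show "(id_blinfun - A) o\<^sub>L (\<Sum>n. bpow A n) = id_blinfun"
    using LIMSEQ_unique by fastforce
qed

lemma bopD: "A \<in> bop \<Longrightarrow> blinfun_apply A (c *\<^sub>C x) = c *\<^sub>C blinfun_apply A x"
  by (simp add: bop_def)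

lemma bop_iff_J: "A \<in> bop \<longleftrightarrow> (\<forall>x. blinfun_apply A (J x) = J (blinfun_apply A x))"
proof
  assume "A \<in> bop" thus "\<forall>x. blinfun_apply A (J x) = J (blinfun_apply A x)"
    by (simp add: bop_def J_def)
next
  assume h: "\<forall>x. blinfun_apply A (J x) = J (blinfun_apply A x)"
  show "A \<in> bop" unfolding bop_def
    by (auto simp: scaleC_decomp blinfun.add_right blinfun.scaleR_right h)
qed

lemma bop_I: "(\<And>x. blinfun_apply A (J x) = J (blinfun_apply A x)) \<Longrightarrow> A \<in> bop"
  using bop_iff_J by blast

lemma bop_J: "A \<in> bop \<Longrightarrow> blinfun_apply A (J x) = J (blinfun_apply A x)"
  using bop_iff_J by blast

lemma bop_id[simp]: "id_blinfun \<in> bop"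
  by (rule bop_I) simp

lemma bop_zero[simp]: "0 \<in> bop"
  by (rule bop_I) (simp add: J_def)

lemma bop_compose[simp]: "A \<in> bop \<Longrightarrow> B \<in> bop \<Longrightarrow> A o\<^sub>L B \<in> bop"
  by (rule bop_I) (simp add: bop_J)

lemma bop_add[simp]: "A \<in> bop \<Longrightarrow> B \<in> bop \<Longrightarrow> A + B \<in> bop"
  by (rule bop_I) (simp add: bop_J blinfun.add_left J_add)

lemma bop_diff[simp]: "A \<in> bop \<Longrightarrow> B \<in> bop \<Longrightarrow> A - B \<in> bop"
  by (rule bop_I) (simp add: bop_J blinfun.diff_left J_diff)

lemma bop_scaleR[simp]: "A \<in> bop \<Longrightarrow> r *\<^sub>R A \<in> bop"
  by (rule bop_I) (simp add: bop_J J_scaleR blinfun.scaleR_left)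

lemma bop_bpow[simp]: "A \<in> bop \<Longrightarrow> bpow A n \<in> bop"
  by (induction n) simp_all

lemma bop_suminf:
  assumes "summable f" "\<And>n. f n \<in> bop"
  shows "suminf f \<in> bop"
proof (rule bop_I)
  fix x
  have s1: "(\<lambda>n. blinfun_apply (f n) x) sums blinfun_apply (suminf f) x"
    using bounded_linear.sums[OF blinfun.bounded_linear_left summable_sums[OF assms(1)]] .
  have s2: "(\<lambda>n. blinfun_apply (f n) (J x)) sums blinfun_apply (suminf f) (J x)"
    using bounded_linear.sums[OF blinfun.bounded_linear_left summable_sums[OF assms(1)]] .
  have "(\<lambda>n. J (blinfun_apply (f n) x)) sums J (blinfun_apply (suminf f) x)"
    using bounded_linear.sums[OF bounded_linear_J s1] .
  hence "(\<lambda>n. blinfun_apply (f n) (J x)) sums J (blinfun_apply (suminf f) x)"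
    using assms(2) by (simp add: bop_J)
  with s2 show "blinfun_apply (suminf f) (J x) = J (blinfun_apply (suminf f) x)"
    using sums_unique2 by blast
qed

section \<open>Riesz representation\<close>

lemma inner_ext:
  fixes z1 z2 :: "'a::real_inner"
  assumes "\<And>x. inner x z1 = inner x z2" shows "z1 = z2"
proof -
  have "inner (z1 - z2) z1 = inner (z1 - z2) z2" by (rule assms)
  hence "inner (z1 - z2) (z1 - z2) = 0" by (simp add: inner_diff_right)
  thus ?thesis by simp
qed

lemma riesz:
  fixes f :: "'a::{real_inner,complete_space} \<Rightarrow> real"
  assumes bl: "bounded_linear f"
  shows "\<exists>z. \<forall>x. f x = inner x z"
proof (cases "\<forall>x. f x = 0")
  case True thus ?thesis by (intro exI[of _ 0]) simp
next
  case False
  interpret f: bounded_linear f by (rule bl)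
  from False obtain a where "f a \<noteq> 0" by blast
  define a' where "a' = (1 / f a) *\<^sub>R a"
  have fa': "f a' = 1" using \<open>f a \<noteq> 0\<close> by (simp add: a'_def f.scaleR)
  define S where "S = {x. f x = 1}"
  have "a' \<in> S" using fa' by (simp add: S_def)
  define d where "d = Inf (norm ` S)"
  have bdd: "bdd_below (norm ` S)" by (rule bdd_belowI[of _ 0]) auto
  have d_le: "d \<le> norm x" if "x \<in> S" for x
    unfolding d_def using bdd that by (simp add: cInf_lower)
  have d_nonneg: "0 \<le> d" unfolding d_def using \<open>a' \<in> S\<close>
    by (intro cInf_greatest) auto
  have "\<exists>x\<in>S. norm x < d + 1 / (Suc n)" for n
  proof -
    have "Inf (norm ` S) < d + 1 / Suc n" unfolding d_def by simp
    then obtain v where "v \<in> norm ` S" "v < d + 1/Suc n"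
      using cInf_lessD[of "norm ` S"] \<open>a' \<in> S\<close> by blast
    thus ?thesis by auto
  qed
  then obtain xs where xs: "\<And>n. xs n \<in> S" "\<And>n. norm (xs n) < d + 1 / Suc n" by metis
  have mid: "2 * d \<le> norm (xs m + xs n)" for m n
  proof -
    have "(1/2) *\<^sub>R (xs m + xs n) \<in> S"
      using xs(1)[of m] xs(1)[of n] by (simp add: S_def f.scaleR f.add)
    hence "d \<le> norm ((1/2) *\<^sub>R (xs m + xs n))" by (rule d_le)
    thus ?thesis by simp
  qed
  have est: "(norm (xs m - xs n))^2 \<le> (4*d+2) * (1/Suc m + 1/Suc n)" for m n
  proof -
    define em en where "em = 1 / real (Suc m)" and "en = 1 / real (Suc n)"
    have em: "0 < em" "em \<le> 1" and en: "0 < en" "en \<le> 1" by (auto simp: em_def en_def divide_simps)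
    have par: "(norm (xs m - xs n))^2 = 2*(norm (xs m))^2 + 2*(norm (xs n))^2 - (norm (xs m + xs n))^2"
      by (simp add: power2_norm_eq_inner inner_add_left inner_add_right inner_diff_left inner_diff_right inner_commute)
    have "(norm (xs m))^2 \<le> (d + em)^2"
      using xs(2)[of m] norm_ge_zero[of "xs m"] unfolding em_def en_def
      by (intro power_mono) auto
    moreover have "(norm (xs n))^2 \<le> (d + en)^2"
      using xs(2)[of n] norm_ge_zero[of "xs n"] unfolding em_def en_def
      by (intro power_mono) auto
    moreover have "(2*d)^2 \<le> (norm (xs m + xs n))^2"
      using mid[of m n] d_nonneg by (intro power_mono) auto
    ultimately have "(norm (xs m - xs n))^2 \<le> 2*(d+em)^2 + 2*(d+en)^2 - (2*d)^2"
      using par by linarith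
    also have "\<dots> = 4*d*(em+en) + 2*em*em + 2*en*en" by (simp add: power2_eq_square algebra_simps)
    also have "\<dots> \<le> (4*d+2) * (em + en)"
    proof -
      have "em*em \<le> em" "en*en \<le> en" using em en by (simp_all add: mult_left_le_one_le)
      hence "4*d*(em+en) + 2*em*em + 2*en*en \<le> 4*d*(em+en) + 2*em + 2*en" by linarith
      also have "\<dots> = (4*d+2) * (em + en)" by (simp add: algebra_simps)
      finally show ?thesis .
    qed
    finally show ?thesis by (simp add: em_def en_def)
  qed
  have "Cauchy xs"
  proof (rule metric_CauchyI)
    fix e :: real assume "0 < e"
    obtain M :: nat where M: "(4*d+2) * 2 / e^2 < M"
      using reals_Archimedean2 by blast
    show "\<exists>M. \<forall>m\<ge>M. \<forall>n\<ge>M. dist (xs m) (xs n) < e"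
    proof (intro exI allI impI)
      fix m n assume "M \<le> m" "M \<le> n"
      have "1 / real (Suc m) \<le> 1 / real (Suc M)" "1 / real (Suc n) \<le> 1 / real (Suc M)"
        using \<open>M \<le> m\<close> \<open>M \<le> n\<close> by (auto simp: divide_simps)
      hence "1 / real (Suc m) + 1 / real (Suc n) \<le> 2 / Suc M" by simp
      hence "(4*d+2) * (1 / real (Suc m) + 1 / real (Suc n)) \<le> (4*d+2) * (2 / Suc M)"
        using d_nonneg by (intro mult_left_mono) auto
      hence "(norm (xs m - xs n))^2 \<le> (4*d+2) * (2 / Suc M)"
        using est[of m n] by linarith
      also have "\<dots> < e^2"
      proof -
        have "(4*d+2) * 2 < e^2 * M" using M \<open>0<e\<close> by (simp add: field_simps)
        also have "\<dots> \<le> e^2 * Suc M" using \<open>0<e\<close> by (intro mult_left_mono) auto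
        finally have "(4*d+2) * 2 < e^2 * Suc M" .
        thus ?thesis by (simp add: field_simps)
      qed
      finally have "(norm (xs m - xs n))^2 < e^2" .
      hence "norm (xs m - xs n) < e" using \<open>0 < e\<close> by (simp add: power_less_imp_less_base)
      thus "dist (xs m) (xs n) < e" by (simp add: dist_norm)
    qed
  qed
  then obtain z0 where lim: "xs \<longlonglongrightarrow> z0" using complete_UNIV convergent_def
    by (metis Cauchy_convergent_iff)
  have "(\<lambda>n. f (xs n)) \<longlonglongrightarrow> f z0" by (rule f.tendsto[OF lim])
  moreover have "(\<lambda>n. f (xs n)) = (\<lambda>n. 1)" using xs(1) by (simp add: S_def)
  ultimately have fz0: "f z0 = 1" using LIMSEQ_unique tendsto_const by metis
  have nz0: "norm z0 \<le> d"
  proof (rule tendsto_le[OF trivial_limit_sequentially])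
    show "(\<lambda>n. norm (xs n)) \<longlonglongrightarrow> norm z0" by (intro tendsto_intros lim)
    have "(\<lambda>n. d + 1 / real (Suc n)) \<longlonglongrightarrow> d + 0"
      by (intro tendsto_intros LIMSEQ_Suc[OF lim_const_over_n])
    thus "(\<lambda>n. d + 1 / real (Suc n)) \<longlonglongrightarrow> d" by simp
    show "\<forall>\<^sub>F n in sequentially. norm (xs n) \<le> d + 1 / real (Suc n)"
      using xs(2) less_imp_le by (intro always_eventually) blast
  qed
  have orth: "inner z0 k = 0" if "f k = 0" for k
  proof -
    define p K where "p = inner z0 k" and "K = (norm k)^2"
    define t where "t = - p / (K + 1)"
    have K: "0 \<le> K" by (simp add: K_def)
    have "z0 + t *\<^sub>R k \<in> S" using fz0 that by (simp add: S_def f.add f.scaleR)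
    hence "norm z0 \<le> norm (z0 + t *\<^sub>R k)" using d_le nz0 by fastforce
    hence "(norm z0)^2 \<le> (norm (z0 + t *\<^sub>R k))^2" by (simp add: power_mono)
    also have "\<dots> = (norm z0)^2 + 2*t*p + t*t*K"
      by (simp add: power2_norm_eq_inner inner_add_left inner_add_right inner_commute p_def K_def algebra_simps)
    finally have "0 \<le> 2*t*p + t*t*K" by simp
    hence "0 \<le> (2*t*p + t*t*K) * (K+1)^2" using K by simp
    also have "(2*t*p + t*t*K) * (K+1)^2 = 2*p*(t*(K+1))*(K+1) + K*(t*(K+1))^2"
      by (simp add: power2_eq_square algebra_simps)
    also have "t*(K+1) = -p" using K by (simp add: t_def)
    also have "2*p*(-p)*(K+1) + K*(-p)^2 = - (p^2) * (K + 2)"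
      by (simp add: power2_eq_square algebra_simps)
    finally have "p^2 * (K+2) \<le> 0" by simp
    hence "p^2 \<le> 0" using K by (auto simp: mult_le_0_iff)
    thus ?thesis unfolding p_def K_def by simp
  qed
  have z0nz: "z0 \<noteq> 0" using fz0 by auto
  show ?thesis
  proof (intro exI allI)
    fix x
    have "f (x - f x *\<^sub>R z0) = 0" using fz0 by (simp add: f.diff f.scaleR)
    hence "inner z0 (x - f x *\<^sub>R z0) = 0" by (rule orth)
    hence "inner x z0 = f x * (norm z0)^2"
      by (simp add: inner_diff_right inner_commute power2_norm_eq_inner)
    thus "f x = inner x ((1 / (norm z0)^2) *\<^sub>R z0)" using z0nz by simp
  qed
qed


section \<open>Adjoint\<close>

definition adjf :: "('a::{real_inner,complete_space} \<Rightarrow>\<^sub>L 'a) \<Rightarrow> 'a \<Rightarrow> 'a" where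
  "adjf A y = (SOME z. \<forall>x. inner (blinfun_apply A x) y = inner x z)"

lemma adjf: "inner (blinfun_apply A x) y = inner x (adjf A y)"
proof -
  have "bounded_linear (\<lambda>x. inner (blinfun_apply A x) y)"
    by (rule bounded_linear_compose[OF bounded_linear_inner_left blinfun.bounded_linear_right])
  hence "\<exists>z. \<forall>x. inner (blinfun_apply A x) y = inner x z" by (rule riesz)
  hence "\<forall>x. inner (blinfun_apply A x) y = inner x (adjf A y)"
    unfolding adjf_def by (rule someI_ex)
  thus ?thesis by blast
qed

lemma bounded_linear_adjf: "bounded_linear (adjf A)"
proof (rule bounded_linear_intro[where K="norm A"])
  fix y1 y2
  show "adjf A (y1 + y2) = adjf A y1 + adjf A y2"
    by (rule inner_ext) (simp add: inner_add_right flip: adjf)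
next
  fix r y
  show "adjf A (r *\<^sub>R y) = r *\<^sub>R adjf A y"
    by (rule inner_ext) (simp add: flip: adjf)
next
  fix y
  have "(norm (adjf A y))^2 = inner (blinfun_apply A (adjf A y)) y"
    by (simp add: adjf power2_norm_eq_inner)
  also have "\<dots> \<le> norm (blinfun_apply A (adjf A y)) * norm y" by (rule norm_cauchy_schwarz)
  also have "\<dots> \<le> norm A * norm (adjf A y) * norm y"
    by (intro mult_right_mono norm_blinfun) simp
  finally have "norm (adjf A y) * norm (adjf A y) \<le> (norm A * norm y) * norm (adjf A y)"
    by (simp add: power2_eq_square algebra_simps)
  thus "norm (adjf A y) \<le> norm y * norm A"
    by (cases "adjf A y = 0") (auto simp: mult.commute)
qed

definition adj :: "('a::{real_inner,complete_space} \<Rightarrow>\<^sub>L 'a) \<Rightarrow> ('a \<Rightarrow>\<^sub>L 'a)" where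
  "adj A = Blinfun (adjf A)"

lemma adj_apply: "blinfun_apply (adj A) = adjf A"
  unfolding adj_def by (rule bounded_linear_Blinfun_apply[OF bounded_linear_adjf])

lemma inner_adj: "inner (blinfun_apply A x) y = inner x (blinfun_apply (adj A) y)"
  by (simp add: adj_apply adjf)

lemma inner_adj': "inner (blinfun_apply (adj A) x) y = inner x (blinfun_apply A y)"
  by (metis inner_adj inner_commute)

lemma norm_adj: "norm (adj A) \<le> norm A"
proof (rule norm_blinfun_bound)
  fix y
  have "(norm (blinfun_apply (adj A) y))^2 = inner (blinfun_apply A (blinfun_apply (adj A) y)) y"
    by (simp add: inner_adj power2_norm_eq_inner)
  also have "\<dots> \<le> norm (blinfun_apply A (blinfun_apply (adj A) y)) * norm y" by (rule norm_cauchy_schwarz)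
  also have "\<dots> \<le> norm A * norm (blinfun_apply (adj A) y) * norm y"
    by (intro mult_right_mono norm_blinfun) simp
  finally have "norm (blinfun_apply (adj A) y) * norm (blinfun_apply (adj A) y)
      \<le> (norm A * norm y) * norm (blinfun_apply (adj A) y)"
    by (simp add: power2_eq_square algebra_simps)
  thus "norm (blinfun_apply (adj A) y) \<le> norm A * norm y"
    by (cases "blinfun_apply (adj A) y = 0") auto
qed simp

lemma bop_adj:
  fixes A :: "'a::complex_hilbert \<Rightarrow>\<^sub>L 'a"
  assumes "A \<in> bop" shows "adj A \<in> bop"
proof (rule bop_I)
  fix y
  show "blinfun_apply (adj A) (J y) = J (blinfun_apply (adj A) y)"
  proof (rule inner_ext)
    fix x
    have "inner x (blinfun_apply (adj A) (J y)) = inner (blinfun_apply A x) (J y)"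
      by (simp add: inner_adj)
    also have "\<dots> = - inner (J (blinfun_apply A x)) y" by (simp add: inner_J_left)
    also have "\<dots> = - inner (blinfun_apply A (J x)) y" using assms by (simp add: bop_J)
    also have "\<dots> = - inner (J x) (blinfun_apply (adj A) y)" by (simp add: inner_adj)
    also have "\<dots> = inner x (J (blinfun_apply (adj A) y))" by (simp add: inner_J_left)
    finally show "inner x (blinfun_apply (adj A) (J y)) = inner x (J (blinfun_apply (adj A) y))" .
  qed
qed

section \<open>Cauchy product for composition\<close>

lemma Cauchy_product_bc:
  fixes a b :: "nat \<Rightarrow> ('a::banach \<Rightarrow>\<^sub>L 'a)"
  assumes a: "summable (\<lambda>k. norm (a k))"
    and b: "summable (\<lambda>k. norm (b k))"
  shows "(\<lambda>k. \<Sum>i\<le>k. a i o\<^sub>L b (k - i)) sums ((\<Sum>k. a k) o\<^sub>L (\<Sum>k. b k))"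
proof -
  let ?S1 = "\<lambda>n::nat. {..<n} \<times> {..<n}"
  let ?S2 = "\<lambda>n::nat. {(i,j). i + j < n}"
  have S1_mono: "\<And>m n. m \<le> n \<Longrightarrow> ?S1 m \<subseteq> ?S1 n" by auto
  have S2_le_S1: "\<And>n. ?S2 n \<subseteq> ?S1 n" by auto
  have S1_le_S2: "\<And>n. ?S1 (n div 2) \<subseteq> ?S2 n" by auto
  have finite_S1: "\<And>n. finite (?S1 n)" by simp
  with S2_le_S1 have finite_S2: "\<And>n. finite (?S2 n)" by (rule finite_subset)
  let ?g = "\<lambda>(i,j). a i o\<^sub>L b j"
  let ?f = "\<lambda>(i,j). norm (a i) * norm (b j)"
  have f_nonneg: "\<And>x. 0 \<le> ?f x" by auto
  then have norm_sum_f: "\<And>A. norm (sum ?f A) = sum ?f A"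
    unfolding real_norm_def
    by (simp only: abs_of_nonneg sum_nonneg [rule_format])
  have sp: "(\<Sum>k<n. a k) o\<^sub>L (\<Sum>k<n. b k) = sum ?g (?S1 n)" for n
    unfolding bc_sum_left by (simp only: bc_sum_right sum.Sigma[rule_format] finite_lessThan)
  have "(\<lambda>n. (\<Sum>k<n. a k) o\<^sub>L (\<Sum>k<n. b k)) \<longlonglongrightarrow> ((\<Sum>k. a k) o\<^sub>L (\<Sum>k. b k))"
    by (intro bounded_bilinear.tendsto[OF bc_bil] summable_LIMSEQ summable_norm_cancel [OF a] summable_norm_cancel [OF b])
  then have 1: "(\<lambda>n. sum ?g (?S1 n)) \<longlonglongrightarrow> ((\<Sum>k. a k) o\<^sub>L (\<Sum>k. b k))"
    by (simp only: sp)
  have "(\<lambda>n. (\<Sum>k<n. norm (a k)) * (\<Sum>k<n. norm (b k))) \<longlonglongrightarrow> (\<Sum>k. norm (a k)) * (\<Sum>k. norm (b k))"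
    using a b by (intro tendsto_mult summable_LIMSEQ)
  then have "(\<lambda>n. sum ?f (?S1 n)) \<longlonglongrightarrow> (\<Sum>k. norm (a k)) * (\<Sum>k. norm (b k))"
    by (simp only: sum_product sum.Sigma [rule_format] finite_lessThan)
  then have "convergent (\<lambda>n. sum ?f (?S1 n))"
    by (rule convergentI)
  then have Cauchy: "Cauchy (\<lambda>n. sum ?f (?S1 n))"
    by (rule convergent_Cauchy)
  have "Zfun (\<lambda>n. sum ?f (?S1 n - ?S2 n)) sequentially"
  proof (rule ZfunI, simp only: eventually_sequentially norm_sum_f)
    fix r :: real
    assume r: "0 < r"
    from CauchyD [OF Cauchy r] obtain N
      where "\<forall>m\<ge>N. \<forall>n\<ge>N. norm (sum ?f (?S1 m) - sum ?f (?S1 n)) < r" ..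
    then have "\<And>m n. N \<le> n \<Longrightarrow> n \<le> m \<Longrightarrow> norm (sum ?f (?S1 m - ?S1 n)) < r"
      by (simp only: sum_diff finite_S1 S1_mono)
    then have N: "\<And>m n. N \<le> n \<Longrightarrow> n \<le> m \<Longrightarrow> sum ?f (?S1 m - ?S1 n) < r"
      by (simp only: norm_sum_f)
    show "\<exists>N. \<forall>n\<ge>N. sum ?f (?S1 n - ?S2 n) < r"
    proof (intro exI allI impI)
      fix n
      assume "2 * N \<le> n"
      then have n: "N \<le> n div 2" by simp
      have "sum ?f (?S1 n - ?S2 n) \<le> sum ?f (?S1 n - ?S1 (n div 2))"
        by (intro sum_mono2 finite_Diff finite_S1 f_nonneg Diff_mono subset_refl S1_le_S2)
      also have "\<dots> < r"
        using n div_le_dividend by (rule N)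
      finally show "sum ?f (?S1 n - ?S2 n) < r" .
    qed
  qed
  then have "Zfun (\<lambda>n. sum ?g (?S1 n - ?S2 n)) sequentially"
    apply (rule Zfun_le [rule_format])
    apply (simp only: norm_sum_f)
    apply (rule order_trans [OF norm_sum sum_mono])
    apply (auto simp add: norm_blinfun_compose)
    done
  then have 2: "(\<lambda>n. sum ?g (?S1 n) - sum ?g (?S2 n)) \<longlonglongrightarrow> 0"
    unfolding tendsto_Zfun_iff diff_0_right
    by (simp only: sum_diff finite_S1 S2_le_S1)
  with 1 have "(\<lambda>n. sum ?g (?S2 n)) \<longlonglongrightarrow> ((\<Sum>k. a k) o\<^sub>L (\<Sum>k. b k))"
    by (rule Lim_transform2)
  then show ?thesis
    by (simp only: sums_def sum.triangle_reindex)
qed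

section \<open>Binomial coefficients of 1/2\<close>

lemma gbinomial_half_bound: "\<bar>((1/2::real) gchoose k)\<bar> \<le> 1"
proof (induction k)
  case 0 thus ?case by simp
next
  case (Suc k)
  have "(1/2::real) * ((1/2) gchoose k) = real k * ((1/2) gchoose k) + real (Suc k) * ((1/2) gchoose (Suc k))"
    by (rule gbinomial_mult_1)
  hence e: "((1/2::real) gchoose (Suc k)) = (1/2 - real k) / real (Suc k) * ((1/2) gchoose k)"
    by (simp add: field_simps)
  have "\<bar>(1/2 - real k) / real (Suc k)\<bar> \<le> 1" by (simp add: divide_simps abs_if)
  hence "\<bar>(1/2 - real k) / real (Suc k)\<bar> * \<bar>((1/2::real) gchoose k)\<bar> \<le> 1 * 1"
    using Suc by (intro mult_mono) auto
  thus ?case by (simp add: e abs_mult)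
qed

lemma half_conv: "(\<Sum>i\<le>k. ((-1)^i * ((1/2::real) gchoose i)) * ((-1)^(k-i) * ((1/2) gchoose (k - i))))
   = (if k = 0 then 1 else if k = 1 then -1 else 0)"
proof -
  have "(\<Sum>i\<le>k. ((-1)^i * ((1/2::real) gchoose i)) * ((-1)^(k-i) * ((1/2) gchoose (k - i))))
     = (\<Sum>i\<le>k. (-1)^k * (((1/2::real) gchoose i) * ((1/2) gchoose (k - i))))"
    by (intro sum.cong refl) (simp add: power_add[symmetric])
  also have "\<dots> = (-1)^k * (\<Sum>i\<in>{0..k}. ((1/2::real) gchoose i) * ((1/2) gchoose (k - i)))"
    by (simp add: sum_distrib_left atLeast0AtMost)
  also have "\<dots> = (-1)^k * ((1::real) gchoose k)"
    by (subst gbinomial_Vandermonde) simp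
  also have "((1::real) gchoose k) = real (1 choose k)"
    by (metis binomial_gbinomial of_nat_1)
  also have "(-1)^k * real (1 choose k) = (if k = 0 then 1 else if k = 1 then -1 else (0::real))"
    by (cases k) (auto simp: binomial_eq_0)
  finally show ?thesis .
qed

subclass (in complex_hilbert) banach ..

section \<open>Self-adjoint operators\<close>

definition sa :: "('a::real_inner \<Rightarrow>\<^sub>L 'a) \<Rightarrow> bool" where
  "sa A \<longleftrightarrow> (\<forall>x y. inner (blinfun_apply A x) y = inner x (blinfun_apply A y))"

lemma saD: "sa A \<Longrightarrow> inner (blinfun_apply A x) y = inner x (blinfun_apply A y)"
  by (simp add: sa_def)

lemma sa_id[simp]: "sa id_blinfun" by (simp add: sa_def)

lemma sa_add: "sa A \<Longrightarrow> sa B \<Longrightarrow> sa (A + B)"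
  by (simp add: sa_def blinfun.add_left inner_add_left inner_add_right)

lemma sa_diff: "sa A \<Longrightarrow> sa B \<Longrightarrow> sa (A - B)"
  by (simp add: sa_def blinfun.diff_left inner_diff_left inner_diff_right)

lemma sa_scaleR: "sa A \<Longrightarrow> sa (r *\<^sub>R A)"
  by (simp add: sa_def blinfun.scaleR_left)

lemma bpow_commute_apply: "blinfun_apply A (blinfun_apply (bpow A n) y) = blinfun_apply (bpow A n) (blinfun_apply A y)"
  by (metis bpow_apply_Suc' bpow.simps(2) blinfun_apply_blinfun_compose)

lemma sa_bpow: "sa A \<Longrightarrow> sa (bpow A n)"
  by (induction n) (auto simp: sa_def bpow_commute_apply)

lemma sums_inner_apply:
  fixes f :: "nat \<Rightarrow> ('a::real_inner \<Rightarrow>\<^sub>L 'a)"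
  assumes "summable f"
  shows "(\<lambda>n. inner (blinfun_apply (f n) x) y) sums inner (blinfun_apply (suminf f) x) y"
proof -
  have "bounded_linear (\<lambda>A. inner (blinfun_apply A x) y)"
    by (rule bounded_linear_compose[OF bounded_linear_inner_left blinfun.bounded_linear_left])
  from bounded_linear.sums[OF this summable_sums[OF assms]] show ?thesis .
qed

lemma sa_suminf:
  fixes f :: "nat \<Rightarrow> ('a::real_inner \<Rightarrow>\<^sub>L 'a)"
  assumes "summable f" "\<And>n. sa (f n)"
  shows "sa (suminf f)"
  unfolding sa_def
proof (intro allI)
  fix x y
  have "(\<lambda>n. inner (blinfun_apply (f n) x) y) sums inner (blinfun_apply (suminf f) x) y"
    by (rule sums_inner_apply[OF assms(1)])
  moreover have "(\<lambda>n. inner (blinfun_apply (f n) y) x) sums inner (blinfun_apply (suminf f) y) x"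
    by (rule sums_inner_apply[OF assms(1)])
  moreover have "inner (blinfun_apply (f n) y) x = inner (blinfun_apply (f n) x) y" for n
    using saD[OF assms(2)[of n], of y x] by (simp add: inner_commute)
  ultimately have "inner (blinfun_apply (suminf f) x) y = inner (blinfun_apply (suminf f) y) x"
    using sums_unique2 by simp
  thus "inner (blinfun_apply (suminf f) x) y = inner x (blinfun_apply (suminf f) y)"
    by (simp add: inner_commute)
qed

lemma polar_norm:
  fixes Z :: "'a::real_inner \<Rightarrow>\<^sub>L 'a"
  assumes "sa Z" "0 \<le> q" "\<And>x. \<bar>inner (blinfun_apply Z x) x\<bar> \<le> q * (norm x)^2"
  shows "norm Z \<le> q"
proof (rule norm_blinfun_bound[OF assms(2)])
  fix x
  show "norm (blinfun_apply Z x) \<le> q * norm x"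
  proof (cases "blinfun_apply Z x = 0")
    case True thus ?thesis using assms(2) by simp
  next
    case False
    define y where "y = (norm x / norm (blinfun_apply Z x)) *\<^sub>R blinfun_apply Z x"
    have ny: "norm y = norm x" using False by (simp add: y_def)
    have sym: "inner (blinfun_apply Z y) x = inner (blinfun_apply Z x) y"
      using assms(1) by (metis saD inner_commute)
    have e: "inner (blinfun_apply Z (x + y)) (x + y) - inner (blinfun_apply Z (x - y)) (x - y)
        = 4 * inner (blinfun_apply Z x) y"
      using sym by (simp add: blinfun.add_right blinfun.diff_right inner_add_left inner_add_right
          inner_diff_left inner_diff_right)
    have "inner (blinfun_apply Z (x + y)) (x + y) \<le> q * (norm (x + y))^2"
      using assms(3)[of "x+y"] by linarith
    moreover have "- inner (blinfun_apply Z (x - y)) (x - y) \<le> q * (norm (x - y))^2"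
      using assms(3)[of "x-y"] by linarith
    ultimately have "4 * inner (blinfun_apply Z x) y \<le> q * ((norm (x + y))^2 + (norm (x - y))^2)"
      using e by (simp add: algebra_simps)
    also have "(norm (x + y))^2 + (norm (x - y))^2 = 2 * (norm x)^2 + 2 * (norm y)^2"
      by (simp add: power2_norm_eq_inner inner_add_left inner_add_right inner_diff_left
          inner_diff_right inner_commute)
    finally have "inner (blinfun_apply Z x) y \<le> q * (norm x)^2" using ny by simp
    moreover have "inner (blinfun_apply Z x) y = norm x * norm (blinfun_apply Z x)"
      using False by (simp add: y_def power2_norm_eq_inner[symmetric] power2_eq_square)
    ultimately have "norm x * norm (blinfun_apply Z x) \<le> norm x * (q * norm x)"
      by (simp add: power2_eq_square algebra_simps)
    moreover have "norm x \<noteq> 0" using False by auto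
    ultimately show ?thesis by (simp add: mult_le_cancel_left)
  qed
qed

section \<open>Square roots\<close>

lemma sqrt_op:
  fixes G :: "'a::complex_hilbert \<Rightarrow>\<^sub>L 'a"
  assumes G: "G \<in> bop" "sa G" and a: "0 < a" and pos: "\<And>x. a * (norm x)^2 \<le> inner (blinfun_apply G x) x"
  shows "\<exists>W V. W \<in> bop \<and> V \<in> bop \<and> W o\<^sub>L V = id_blinfun \<and> V o\<^sub>L W = id_blinfun \<and>
           (\<forall>x. (norm (blinfun_apply W x))^2 = inner (blinfun_apply G x) x)"
proof -
  define c where "c = norm G + a"
  have c: "0 < c" "a \<le> c" using a norm_ge_zero[of G] unfolding c_def by linarith+
  define Z where "Z = id_blinfun - (1/c) *\<^sub>R G"
  define q where "q = 1 - a / c"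
  have q: "0 \<le> q" "q < 1" using c a by (auto simp: q_def field_simps)
  have Zbop: "Z \<in> bop" using G by (simp add: Z_def)
  have Zsa: "sa Z" using G by (simp add: Z_def sa_diff sa_scaleR)
  have Zx: "inner (blinfun_apply Z x) x = (norm x)^2 - inner (blinfun_apply G x) x / c" for x
    by (simp add: Z_def blinfun.diff_left blinfun.scaleR_left inner_diff_left power2_norm_eq_inner)
  have Gup: "inner (blinfun_apply G x) x \<le> norm G * (norm x)^2" for x
  proof -
    have "inner (blinfun_apply G x) x \<le> norm (blinfun_apply G x) * norm x" by (rule norm_cauchy_schwarz)
    also have "\<dots> \<le> norm G * norm x * norm x" by (intro mult_right_mono norm_blinfun) simp
    finally show ?thesis by (simp add: power2_eq_square algebra_simps)
  qed
  have "\<bar>inner (blinfun_apply Z x) x\<bar> \<le> q * (norm x)^2" for x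
  proof -
    have "inner (blinfun_apply G x) x / c \<le> (norm G / c) * (norm x)^2"
      using Gup[of x] c by (simp add: divide_right_mono)
    moreover have "(a / c) * (norm x)^2 \<le> inner (blinfun_apply G x) x / c"
      using pos[of x] c by (simp add: divide_right_mono)
    moreover have "norm G / c = 1 - a / c" using c by (simp add: c_def field_simps)
    moreover have "0 \<le> (a / c) * (norm x)^2" using a c by simp
    moreover have "q * (norm x)^2 = (norm x)^2 - (a / c) * (norm x)^2" by (simp add: q_def algebra_simps)
    moreover have "(1 - a / c) * (norm x)^2 = (norm x)^2 - (a / c) * (norm x)^2" by (simp add: algebra_simps)
    moreover have "0 \<le> (norm x)^2" by simp
    ultimately show ?thesis unfolding Zx by (simp only: abs_le_iff) linarith
  qed
  hence nZ: "norm Z \<le> q" by (rule polar_norm[OF Zsa q(1)])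
  define cs where "cs k = (-1)^k * ((1/2::real) gchoose k)" for k
  have cs_bd: "\<bar>cs k\<bar> \<le> 1" for k by (simp add: cs_def abs_mult gbinomial_half_bound)
  define u where "u k = cs k *\<^sub>R bpow Z k" for k
  have nu: "norm (u k) \<le> q^k" for k
  proof -
    have "norm (u k) = \<bar>cs k\<bar> * norm (bpow Z k)" by (simp add: u_def)
    also have "\<dots> \<le> 1 * norm Z ^ k" using cs_bd[of k] norm_bpow[of Z k]
      by (intro mult_mono) auto
    also have "\<dots> \<le> q ^ k" using nZ by (simp add: power_mono)
    finally show ?thesis .
  qed
  have su: "summable (\<lambda>k. norm (u k))"
    by (rule summable_comparison_test[OF _ summable_geometric[of q]]) (use nu q in auto)
  define S where "S = (\<Sum>k. u k)"
  have Sbop: "S \<in> bop" unfolding S_def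
    by (rule bop_suminf[OF summable_norm_cancel[OF su]]) (simp add: u_def Zbop)
  have Ssa: "sa S" unfolding S_def
    by (rule sa_suminf[OF summable_norm_cancel[OF su]]) (simp add: u_def sa_scaleR sa_bpow Zsa)
  have "(\<lambda>k. \<Sum>i\<le>k. u i o\<^sub>L u (k - i)) sums (S o\<^sub>L S)"
    unfolding S_def by (rule Cauchy_product_bc[OF su su])
  moreover have "(\<Sum>i\<le>k. u i o\<^sub>L u (k - i)) = (if k = 0 then 1 else if k = 1 then -1 else (0::real)) *\<^sub>R bpow Z k" for k
  proof -
    have "(\<Sum>i\<le>k. u i o\<^sub>L u (k - i)) = (\<Sum>i\<le>k. (cs i * cs (k - i)) *\<^sub>R bpow Z k)"
    proof (intro sum.cong refl)
      fix i assume "i \<in> {..k}"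
      hence "bpow Z i o\<^sub>L bpow Z (k - i) = bpow Z k" by (simp flip: bpow_add)
      thus "u i o\<^sub>L u (k - i) = (cs i * cs (k - i)) *\<^sub>R bpow Z k"
        by (simp add: u_def bc_scaleR_left bc_scaleR_right)
    qed
    also have "\<dots> = (\<Sum>i\<le>k. cs i * cs (k - i)) *\<^sub>R bpow Z k" by (simp add: scaleR_sum_left)
    also have "(\<Sum>i\<le>k. cs i * cs (k - i)) = (if k = 0 then 1 else if k = 1 then -1 else (0::real))"
      unfolding cs_def by (rule half_conv)
    finally show ?thesis .
  qed
  ultimately have "(\<lambda>k. (if k = 0 then 1 else if k = 1 then -1 else (0::real)) *\<^sub>R bpow Z k) sums (S o\<^sub>L S)"
    by simp
  moreover have "(\<lambda>k. (if k = 0 then 1 else if k = 1 then -1 else (0::real)) *\<^sub>R bpow Z k) sums (id_blinfun - Z)"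
  proof -
    have "(\<lambda>k. (if k = 0 then 1 else if k = 1 then -1 else (0::real)) *\<^sub>R bpow Z k) sums
          (\<Sum>k\<in>{0,1}. (if k = 0 then 1 else if k = 1 then -1 else (0::real)) *\<^sub>R bpow Z k)"
      by (rule sums_finite) auto
    thus ?thesis by simp
  qed
  ultimately have SS: "S o\<^sub>L S = id_blinfun - Z" using sums_unique2 by blast
  define N where "N = (\<Sum>n. bpow Z n)"
  have nZ1: "norm Z < 1" using nZ q by linarith
  have N1: "(id_blinfun - Z) o\<^sub>L N = id_blinfun" "N o\<^sub>L (id_blinfun - Z) = id_blinfun"
    unfolding N_def using neumann[OF nZ1] by auto
  have Nbop: "N \<in> bop" unfolding N_def
    by (rule bop_suminf[OF summable_norm_cancel[OF summable_bpow[OF nZ1]]]) (simp add: Zbop)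
  have r: "S o\<^sub>L (S o\<^sub>L N) = id_blinfun" using N1 SS by (simp flip: bc_assoc)
  have l: "(N o\<^sub>L S) o\<^sub>L S = id_blinfun" using N1 SS by (simp add: bc_assoc)
  have lr: "N o\<^sub>L S = S o\<^sub>L N"
  proof -
    have "N o\<^sub>L S = (N o\<^sub>L S) o\<^sub>L (S o\<^sub>L (S o\<^sub>L N))" using r by simp
    also have "\<dots> = ((N o\<^sub>L S) o\<^sub>L S) o\<^sub>L (S o\<^sub>L N)" by (simp add: bc_assoc)
    also have "\<dots> = S o\<^sub>L N" using l by simp
    finally show ?thesis .
  qed
  define W where "W = sqrt c *\<^sub>R S"
  define V where "V = (1 / sqrt c) *\<^sub>R (S o\<^sub>L N)"
  show ?thesis
  proof (intro exI conjI allI)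
    show "W \<in> bop" using Sbop by (simp add: W_def)
    show "V \<in> bop" using Sbop Nbop by (simp add: V_def)
    show "W o\<^sub>L V = id_blinfun" using c r by (simp add: W_def V_def bc_scaleR_left bc_scaleR_right)
    show "V o\<^sub>L W = id_blinfun" using c l lr by (simp add: W_def V_def bc_scaleR_left bc_scaleR_right bc_assoc)
    fix x
    have "(norm (blinfun_apply W x))^2 = c * inner (blinfun_apply S x) (blinfun_apply S x)"
      using c by (simp add: W_def blinfun.scaleR_left power_mult_distrib dot_square_norm)
    also have "\<dots> = c * inner (blinfun_apply (S o\<^sub>L S) x) x"
      using Ssa by (simp add: saD inner_commute)
    also have "\<dots> = inner (blinfun_apply G x) x"
      using c by (simp add: SS Z_def blinfun.diff_left blinfun.scaleR_left inner_diff_left)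
    finally show "(norm (blinfun_apply W x))^2 = inner (blinfun_apply G x) x" .
  qed
qed

lemma scaleC_minus_left: fixes x :: "'a::complex_hilbert" shows "(- c) *\<^sub>C x = - (c *\<^sub>C x)"
  by (metis add_eq_0_iff scaleC_add_left scaleC_zero_left add.right_inverse)

lemma scaleC_diff_left: fixes x :: "'a::complex_hilbert" shows "(c - d) *\<^sub>C x = c *\<^sub>C x - d *\<^sub>C x"
  by (metis diff_conv_add_uminus scaleC_add_left scaleC_minus_left)

definition scC :: "complex \<Rightarrow> ('a::complex_hilbert \<Rightarrow>\<^sub>L 'a)" where
  "scC c = Blinfun (\<lambda>x. c *\<^sub>C x)"

lemma scC_apply[simp]: "blinfun_apply (scC c) x = c *\<^sub>C x"
  unfolding scC_def by (simp add: bounded_linear_Blinfun_apply[OF bounded_linear_scaleC])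

lemma scC_bop[simp]: "scC c \<in> bop"
  by (simp add: bop_def scaleC_scaleC mult.commute)

lemma norm_scC: "norm (scC c :: 'a::complex_hilbert \<Rightarrow>\<^sub>L 'a) \<le> cmod c"
  by (rule norm_blinfun_bound) (simp_all add: norm_scaleC)

lemma scC_mult: "scC c o\<^sub>L scC d = scC (c * d)"
  by (rule blinfun_eqI) (simp add: scaleC_scaleC)

lemma scC_one[simp]: "scC 1 = id_blinfun"
  by (rule blinfun_eqI) simp

lemma scC_diff: "scC c - scC d = scC (c - d)"
  by (rule blinfun_eqI) (simp add: blinfun.diff_left scaleC_diff_left)

lemma bop_comm_scC: "A \<in> bop \<Longrightarrow> A o\<^sub>L scC c = scC c o\<^sub>L A"
  by (rule blinfun_eqI) (simp add: bopD)

lemma bpow_scC_apply: "E \<in> bop \<Longrightarrow> blinfun_apply (bpow (scC w o\<^sub>L E) n) x = w^n *\<^sub>C blinfun_apply (bpow E n) x"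
  by (induction n arbitrary: x) (simp_all add: bopD scaleC_scaleC)

lemma bpow_scC: "E \<in> bop \<Longrightarrow> bpow (scC w o\<^sub>L E) n = scC (w^n) o\<^sub>L bpow E n"
  by (rule blinfun_eqI) (simp add: bpow_scC_apply)

definition invb :: "('a::complex_hilbert \<Rightarrow>\<^sub>L 'a) \<Rightarrow> ('a \<Rightarrow>\<^sub>L 'a) \<Rightarrow> bool" where
  "invb X R \<longleftrightarrow> R \<in> bop \<and> R o\<^sub>L X = id_blinfun \<and> X o\<^sub>L R = id_blinfun"

lemma invb_scC:
  assumes "invb X R" "c \<noteq> 0"
  shows "invb (scC c o\<^sub>L X) (R o\<^sub>L scC (1/c))"
  using assms unfolding invb_def
  by (simp add: bc_assoc scC_mult) (simp flip: bc_assoc add: scC_mult)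

lemma invb_unique: "invb X R \<Longrightarrow> S o\<^sub>L X = id_blinfun \<Longrightarrow> S = R"
  unfolding invb_def by (metis bc_assoc bc_id_left bc_id_right)

lemma spectrum_iff: "z \<notin> bop_spectrum E \<longleftrightarrow> (\<exists>M. invb (E - scC z) M)"
  unfolding bop_spectrum_def invb_def
proof (simp, safe)
  fix M assume "M \<in> bop" "\<forall>x. blinfun_apply M (blinfun_apply E x - z *\<^sub>C x) = x \<and>
          blinfun_apply E (blinfun_apply M x) - z *\<^sub>C blinfun_apply M x = x"
  thus "\<exists>M. M \<in> bop \<and> M o\<^sub>L (E - scC z) = id_blinfun \<and> (E - scC z) o\<^sub>L M = id_blinfun"
    by (intro exI[of _ M]) (auto intro!: blinfun_eqI simp: blinfun.diff_left)
next
  fix M assume "M \<in> bop" "M o\<^sub>L (E - scC z) = id_blinfun" "(E - scC z) o\<^sub>L M = id_blinfun"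
  hence "blinfun_apply M (blinfun_apply E x - z *\<^sub>C x) = x \<and>
          blinfun_apply E (blinfun_apply M x) - z *\<^sub>C blinfun_apply M x = x" for x
    by (metis (no_types, lifting) blinfun.diff_left blinfun_apply_blinfun_compose
        blinfun_apply_id_blinfun scC_apply)
  thus "\<exists>M\<in>bop. \<forall>x. blinfun_apply M (blinfun_apply E x - z *\<^sub>C x) = x \<and>
          blinfun_apply E (blinfun_apply M x) - z *\<^sub>C blinfun_apply M x = x"
    using \<open>M \<in> bop\<close> by blast
qed

definition Ew :: "('a::complex_hilbert \<Rightarrow>\<^sub>L 'a) \<Rightarrow> complex \<Rightarrow> ('a \<Rightarrow>\<^sub>L 'a)" where
  "Ew E w = id_blinfun - (scC w o\<^sub>L E)"

lemma scaleC_inv_cancel: fixes y :: "'a::complex_hilbert" shows "w \<noteq> 0 \<Longrightarrow> (1/w) *\<^sub>C (w *\<^sub>C y) = y"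
  by (simp add: scaleC_scaleC)

lemma E_minus_scC: "w \<noteq> 0 \<Longrightarrow> E - scC (1/w) = scC (-(1/w)) o\<^sub>L Ew E w"
  unfolding Ew_def
  by (rule blinfun_eqI) (simp add: blinfun.diff_left scaleC_diff_right scaleC_minus_left scaleC_inv_cancel)

lemma Ew_eq: "w \<noteq> 0 \<Longrightarrow> Ew E w = scC (-w) o\<^sub>L (E - scC (1/w))"
  by (simp add: E_minus_scC flip: bc_assoc add: scC_mult)

lemma neumann_invb:
  fixes A :: "'a::complex_hilbert \<Rightarrow>\<^sub>L 'a"
  assumes "A \<in> bop" "norm A < 1"
  shows "invb (id_blinfun - A) (\<Sum>n. bpow A n)"
  unfolding invb_def using neumann[OF assms(2)] assms
  by (simp add: bop_suminf summable_norm_cancel[OF summable_bpow[OF assms(2)]])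

lemma spectrum_bounded:
  assumes E: "E \<in> bop" and z: "z \<in> bop_spectrum E"
  shows "cmod z \<le> norm E"
proof (rule ccontr)
  assume "\<not> cmod z \<le> norm E"
  hence lt: "norm E < cmod z" by simp
  hence z0: "z \<noteq> 0" by auto
  define w where "w = 1 / z"
  have w0: "w \<noteq> 0" using z0 by (simp add: w_def)
  have "norm (scC w o\<^sub>L E) \<le> cmod w * norm E"
    using norm_blinfun_compose[of "scC w" E] norm_scC[of w] by (meson mult_right_mono norm_ge_zero order_trans)
  also have "\<dots> < 1" using lt z0 by (simp add: w_def norm_divide field_simps)
  finally have "norm (scC w o\<^sub>L E) < 1" .
  hence "invb (Ew E w) (\<Sum>n. bpow (scC w o\<^sub>L E) n)"
    unfolding Ew_def using E by (intro neumann_invb) simp_all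
  hence "invb (scC (-(1/w)) o\<^sub>L Ew E w) ((\<Sum>n. bpow (scC w o\<^sub>L E) n) o\<^sub>L scC (1 / (-(1/w))))"
    using w0 by (intro invb_scC) auto
  hence "invb (E - scC z) ((\<Sum>n. bpow (scC w o\<^sub>L E) n) o\<^sub>L scC (1 / (-(1/w))))"
    using E_minus_scC[OF w0, of E] by (simp add: w_def)
  hence "z \<notin> bop_spectrum E" using spectrum_iff by blast
  thus False using z by contradiction
qed

definition phi :: "'a::complex_hilbert \<Rightarrow> 'a \<Rightarrow> complex" where
  "phi y v = Complex (inner v y) (inner v (J y))"

lemma bounded_linear_phi: "bounded_linear (phi y)"
proof (rule bounded_linear_intro[where K="2 * norm y"])
  fix u v show "phi y (u + v) = phi y u + phi y v"
    by (simp add: phi_def complex_eq_iff inner_add_left)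
next
  fix r u show "phi y (r *\<^sub>R u) = r *\<^sub>R phi y u"
    by (simp add: phi_def complex_eq_iff)
next
  fix v
  have "cmod (phi y v) \<le> \<bar>inner v y\<bar> + \<bar>inner v (J y)\<bar>"
    using cmod_le[of "phi y v"] by (simp add: phi_def)
  also have "\<dots> \<le> norm v * norm y + norm v * norm (J y)"
    by (intro add_mono Cauchy_Schwarz_ineq2)
  finally show "norm (phi y v) \<le> norm v * (2 * norm y)" by simp
qed

lemma norm_phi: "cmod (phi y v) \<le> 2 * norm v * norm y"
proof -
  have "cmod (phi y v) \<le> \<bar>inner v y\<bar> + \<bar>inner v (J y)\<bar>"
    using cmod_le[of "phi y v"] by (simp add: phi_def)
  also have "\<dots> \<le> norm v * norm y + norm v * norm (J y)"
    by (intro add_mono Cauchy_Schwarz_ineq2)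
  finally show ?thesis by simp
qed

lemma phi_scaleC: "phi y (c *\<^sub>C v) = c * phi y v"
  by (simp add: phi_def complex_eq_iff scaleC_decomp inner_add_left inner_J_left)

lemma Re_phi_self: "Re (phi y y) = (norm y)^2"
  by (simp add: phi_def dot_square_norm)

lemma scC_zero[simp]: "scC 0 = 0"
  by (rule blinfun_eqI) simp

lemma norm_scC_comp: "norm (scC c o\<^sub>L E) \<le> cmod c * norm (E::'a::complex_hilbert \<Rightarrow>\<^sub>L 'a)"
proof -
  have "norm (scC c o\<^sub>L E) \<le> norm (scC c :: 'a \<Rightarrow>\<^sub>L 'a) * norm E" by (rule norm_blinfun_compose)
  also have "\<dots> \<le> cmod c * norm E" by (intro mult_right_mono norm_scC) simp
  finally show ?thesis .
qed

lemma norm_comp3: "norm (A o\<^sub>L B o\<^sub>L C) \<le> norm A * norm B * norm C"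
proof -
  have "norm (A o\<^sub>L B o\<^sub>L C) \<le> norm (A o\<^sub>L B) * norm C" by (rule norm_blinfun_compose)
  also have "\<dots> \<le> norm A * norm B * norm C" by (intro mult_right_mono norm_blinfun_compose) simp
  finally show ?thesis .
qed

lemma spectral_decay:
  fixes E :: "'a::complex_hilbert \<Rightarrow>\<^sub>L 'a"
  assumes E: "E \<in> bop" and sr: "spectral_radius E < 1"
  shows "\<exists>K \<rho>. 0 < \<rho> \<and> \<rho> < 1 \<and> (\<forall>n. norm (bpow E n) \<le> K * \<rho>^n)"
proof -
  define r1 where "r1 = max (spectral_radius E) 0"
  have r1: "0 \<le> r1" "r1 < 1" using sr by (auto simp: r1_def)
  have spec: "cmod z \<le> r1" if "z \<in> bop_spectrum E" for z
  proof -
    have "bdd_above (cmod ` bop_spectrum E)"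
      using spectrum_bounded[OF E] by (intro bdd_aboveI[of _ "norm E"]) auto
    hence "cmod z \<le> spectral_radius E" unfolding spectral_radius_def using that
      by (intro cSup_upper) auto
    thus ?thesis by (simp add: r1_def)
  qed
  define D where "D = {w::complex. cmod w * r1 < 1}"
  have openD: "open D" unfolding D_def by (intro open_Collect_less continuous_intros)
  have invD: "\<exists>R. invb (Ew E w) R" if "w \<in> D" for w
  proof (cases "w = 0")
    case True thus ?thesis by (intro exI[of _ id_blinfun]) (simp add: invb_def Ew_def)
  next
    case False
    have "1/w \<notin> bop_spectrum E"
    proof
      assume "1/w \<in> bop_spectrum E"
      hence "cmod (1/w) \<le> r1" by (rule spec)
      hence "1 \<le> cmod w * r1" using False by (simp add: norm_divide field_simps)
      thus False using that by (simp add: D_def)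
    qed
    then obtain M where "invb (E - scC (1/w)) M" using spectrum_iff by blast
    hence "invb (scC (-w) o\<^sub>L (E - scC (1/w))) (M o\<^sub>L scC (1/(-w)))"
      using False by (intro invb_scC) auto
    thus ?thesis using Ew_eq[OF False, of E] by auto
  qed
  define R where "R w = (SOME R. invb (Ew E w) R)" for w
  have R: "invb (Ew E w) (R w)" if "w \<in> D" for w
    unfolding R_def using invD[OF that] by (rule someI_ex)
  have Rbop: "R w \<in> bop" if "w \<in> D" for w using R[OF that] by (simp add: invb_def)
  have Ewdiff: "Ew E v - Ew E w = scC (w - v) o\<^sub>L E" for v w
    by (rule blinfun_eqI) (simp add: Ew_def blinfun.diff_left scaleC_diff_left)
  have resid: "R w - R v = R w o\<^sub>L (scC (w - v) o\<^sub>L E) o\<^sub>L R v" if "v \<in> D" "w \<in> D" for v w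
  proof -
    have "R w o\<^sub>L (Ew E v - Ew E w) o\<^sub>L R v = R w - R v"
      using R[OF that(1)] R[OF that(2)] unfolding invb_def
      by (simp add: bc_diff_left bc_diff_right bc_assoc)
    thus ?thesis by (simp add: Ewdiff)
  qed
  have nres: "norm (R w - R v) \<le> norm (R w) * (cmod (w - v) * (norm E * norm (R v)))"
    if "v \<in> D" "w \<in> D" for v w
  proof -
    have "norm (R w - R v) \<le> norm (R w) * norm (scC (w - v) o\<^sub>L E) * norm (R v)"
      unfolding resid[OF that] by (rule norm_comp3)
    also have "\<dots> \<le> norm (R w) * (cmod (w - v) * norm E) * norm (R v)"
      by (intro mult_right_mono mult_left_mono norm_scC_comp) simp_all
    finally show ?thesis by (simp add: algebra_simps)
  qed
  have contR: "continuous_on D R"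
    unfolding continuous_on_iff
  proof (intro ballI allI impI)
    fix v e assume v: "v \<in> D" and e: "(0::real) < e"
    define a where "a = norm E * norm (R v)"
    define Nv where "Nv = norm (R v)"
    have a: "0 \<le> a" and Nv: "0 \<le> Nv" by (simp_all add: a_def Nv_def)
    define P where "P = 2 * Nv * a"
    have P: "0 \<le> P" using a Nv by (simp add: P_def)
    define d where "d = min (1 / (2 * a + 1)) (e / (P + 1))"
    have d: "0 < d" using a P e by (simp add: d_def)
    show "\<exists>d>0. \<forall>w\<in>D. dist w v < d \<longrightarrow> dist (R w) (R v) < e"
    proof (intro exI conjI ballI impI)
      show "0 < d" by (rule d)
      fix w assume w: "w \<in> D" and dw: "dist w v < d"
      define t where "t = cmod (w - v)"
      define Nw where "Nw = norm (R w)"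
      have t: "0 \<le> t" "t < 1 / (2 * a + 1)" "t < e / (P + 1)"
        using dw by (auto simp: t_def d_def dist_norm)
      have ta: "t * a \<le> 1/2"
      proof -
        have "t * (2 * a + 1) < 1" using t(2) a by (simp add: field_simps)
        thus ?thesis using t(1) a by (simp add: algebra_simps)
      qed
      have f1: "norm (R w - R v) \<le> Nw * (t * a)"
        using nres[OF v w] by (simp add: Nw_def t_def a_def)
      have f2: "Nw \<le> Nv + norm (R w - R v)"
        unfolding Nw_def Nv_def by (metis add.commute norm_triangle_sub)
      have "Nw * (t * a) \<le> Nw * (1/2)" using ta by (intro mult_left_mono) (simp_all add: Nw_def)
      hence Nw2: "Nw \<le> 2 * Nv" using f1 f2 by linarith
      have "norm (R w - R v) \<le> (2 * Nv) * (t * a)"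
        using f1 Nw2 t(1) a by (meson mult_right_mono mult_nonneg_nonneg order_trans)
      also have "\<dots> = P * t" by (simp add: P_def)
      also have "\<dots> \<le> P * (e / (P + 1))" using t(3) P by (intro mult_left_mono) auto
      also have "\<dots> < e" using P e by (simp add: field_simps)
      finally show "dist (R w) (R v) < e" by (simp add: dist_norm)
    qed
  qed
  have isContR: "isCont R v" if "v \<in> D" for v
    using contR openD that continuous_on_eq_continuous_at by blast
  define g where "g x y w = phi y (blinfun_apply (R w) x)" for x y w
  have gderiv: "(g x y has_field_derivative phi y (blinfun_apply (R v) (blinfun_apply E (blinfun_apply (R v) x)))) (at v)"
    if v: "v \<in> D" for x y v
  proof -
    define h where "h w = phi y (blinfun_apply (R w) (blinfun_apply E (blinfun_apply (R v) x)))" for w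
    have hlim: "(h \<longlongrightarrow> h v) (at v)"
    proof -
      have "(R \<longlongrightarrow> R v) (at v)" using isContR[OF v] by (simp add: isCont_def)
      hence "((\<lambda>w. blinfun_apply (R w) (blinfun_apply E (blinfun_apply (R v) x))) \<longlongrightarrow>
             blinfun_apply (R v) (blinfun_apply E (blinfun_apply (R v) x))) (at v)"
        by (intro blinfun.tendsto tendsto_const)
      thus ?thesis unfolding h_def by (rule bounded_linear.tendsto[OF bounded_linear_phi])
    qed
    have ev: "eventually (\<lambda>w. h w = (g x y w - g x y v) / (w - v)) (at v)"
    proof -
      have "eventually (\<lambda>w. w \<in> D - {v}) (at v)" by (rule eventually_at_in_open[OF openD v])
      thus ?thesis
      proof (rule eventually_mono)
        fix w assume w: "w \<in> D - {v}"
        have "g x y w - g x y v = phi y (blinfun_apply (R w - R v) x)"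
          unfolding g_def by (simp add: blinfun.diff_left linear_diff[OF bounded_linear.linear[OF bounded_linear_phi]])
        also have "\<dots> = phi y (blinfun_apply (R w) ((w - v) *\<^sub>C blinfun_apply E (blinfun_apply (R v) x)))"
          using w v by (simp add: resid)
        also have "\<dots> = (w - v) * h w"
          using Rbop[of w] w by (simp add: bopD phi_scaleC h_def)
        finally show "h w = (g x y w - g x y v) / (w - v)" using w by simp
      qed
    qed
    have "((\<lambda>w. (g x y w - g x y v) / (w - v)) \<longlongrightarrow> h v) (at v)"
      by (rule Lim_transform_eventually[OF hlim ev])
    thus ?thesis by (simp add: has_field_derivative_iff h_def)
  qed
  have gholo: "g x y holomorphic_on D" for x y
    using gderiv openD by (auto simp: holomorphic_on_open)
  define \<delta> where "\<delta> = 1 / (norm E + 1)"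
  have nE1: "0 < norm E + 1" "1 \<le> norm E + 1" using norm_ge_zero[of E] by linarith+
  have \<delta>: "0 < \<delta>" "\<delta> \<le> 1" by (simp_all add: \<delta>_def nE1)
  have gsums: "(\<lambda>n. phi y (blinfun_apply (bpow E n) x) * w^n) sums g x y w" if w: "cmod w < \<delta>" for x y w
  proof -
    have wD: "w \<in> D"
    proof -
      have "cmod w * r1 \<le> cmod w * 1" using r1 by (intro mult_left_mono) auto
      thus ?thesis using w \<delta> by (simp add: D_def)
    qed
    define A where "A = scC w o\<^sub>L E"
    have "norm A \<le> cmod w * norm E"
      unfolding A_def by (rule norm_scC_comp)
    also have "\<dots> \<le> \<delta> * norm E" using w by (intro mult_right_mono) auto
    also have "\<dots> = norm E / (norm E + 1)" by (simp add: \<delta>_def)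
    also have "\<dots> < 1" using pos_divide_less_eq[OF nE1(1), of "norm E" 1] by simp
    finally have nA: "norm A < 1" .
    have "invb (Ew E w) (\<Sum>n. bpow A n)"
      unfolding Ew_def A_def using E nA[unfolded A_def] by (intro neumann_invb) simp_all
    hence Req: "R w = (\<Sum>n. bpow A n)"
      using R[OF wD] by (metis invb_def invb_unique)
    have "(\<lambda>n. blinfun_apply (bpow A n) x) sums blinfun_apply (R w) x"
      unfolding Req
      by (rule bounded_linear.sums[OF blinfun.bounded_linear_left summable_sums[OF summable_norm_cancel[OF summable_bpow[OF nA]]]])
    hence "(\<lambda>n. phi y (blinfun_apply (bpow A n) x)) sums g x y w"
      unfolding g_def by (rule bounded_linear.sums[OF bounded_linear_phi])
    thus ?thesis using E by (simp add: A_def bpow_scC_apply phi_scaleC mult.commute)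
  qed
  have coeff: "phi y (blinfun_apply (bpow E n) x) = (deriv ^^ n) (g x y) 0 / fact n" for x y n
  proof -
    define F where "F = Abs_fps (\<lambda>n. phi y (blinfun_apply (bpow E n) x))"
    have "summable (\<lambda>n. fps_nth F n * (complex_of_real (\<delta>/2))^n)"
      using gsums[of "complex_of_real (\<delta>/2)"] \<delta> by (auto simp: F_def sums_iff)
    hence "conv_radius (fps_nth F) \<ge> norm (complex_of_real (\<delta>/2))" by (rule conv_radius_geI)
    hence rad: "fps_conv_radius F > 0" using \<delta>
      unfolding fps_conv_radius_def by (simp add: zero_ereal_def) (metis ereal_less(2) less_le_trans zero_ereal_def half_gt_zero)
    have "eventually (\<lambda>w. w \<in> ball 0 \<delta>) (nhds (0::complex))"
      using \<delta> by (intro eventually_nhds_in_open) auto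
    hence "eventually (\<lambda>w. eval_fps F w = g x y w) (nhds 0)"
    proof (rule eventually_mono)
      fix w :: complex assume "w \<in> ball 0 \<delta>"
      hence "cmod w < \<delta>" by simp
      from gsums[OF this] show "eval_fps F w = g x y w"
        by (simp add: eval_fps_def F_def sums_iff)
    qed
    hence "g x y has_fps_expansion F" using rad by (simp add: has_fps_expansion_def)
    from fps_nth_fps_expansion[OF this, of n] show ?thesis by (simp add: F_def)
  qed
  define s where "s = 2 / (1 + r1)"
  have s: "1 < s" "s * r1 < 1" using r1 by (auto simp: s_def field_simps)
  have cballD: "cball 0 s \<subseteq> D"
  proof
    fix w :: complex assume "w \<in> cball 0 s"
    hence "cmod w \<le> s" by simp
    hence "cmod w * r1 \<le> s * r1" using r1 by (intro mult_right_mono) auto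
    thus "w \<in> D" using s by (simp add: D_def)
  qed
  have "compact (R ` sphere 0 s)"
    by (intro compact_continuous_image continuous_on_subset[OF contR]) (use cballD in auto)
  then obtain Rm where Rm: "Rm > 0" "\<And>w. w \<in> sphere 0 s \<Longrightarrow> norm (R w) \<le> Rm"
    using compact_imp_bounded bounded_pos by (metis imageI)
  have est: "norm (blinfun_apply (bpow E n) x) \<le> (2 * Rm) * (1/s)^n * norm x" for n x
  proof -
    define y where "y = blinfun_apply (bpow E n) x"
    define B where "B = 2 * Rm * norm x * norm y"
    have "norm ((deriv ^^ n) (g x y) 0) \<le> fact n * B / s^n"
    proof (rule Cauchy_inequality)
      show "g x y holomorphic_on ball 0 s" using gholo cballD by (meson ball_subset_cball holomorphic_on_subset order_trans)
      show "continuous_on (cball 0 s) (g x y)"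
        using holomorphic_on_imp_continuous_on[OF gholo] cballD by (rule continuous_on_subset)
      show "0 < s" using s by simp
      fix w :: complex assume "norm (0 - w) = s"
      hence ws: "w \<in> sphere 0 s" by simp
      have "cmod (g x y w) \<le> 2 * norm (blinfun_apply (R w) x) * norm y" unfolding g_def by (rule norm_phi)
      also have "\<dots> \<le> 2 * (Rm * norm x) * norm y"
      proof -
        have "norm (blinfun_apply (R w) x) \<le> Rm * norm x"
          using norm_blinfun[of "R w" x] mult_right_mono[OF Rm(2)[OF ws] norm_ge_zero[of x]] by linarith
        thus ?thesis by (intro mult_right_mono) auto
      qed
      finally show "norm (g x y w) \<le> B" by (simp add: B_def algebra_simps)
    qed
    hence "norm ((deriv ^^ n) (g x y) 0) / fact n \<le> (fact n * B / s^n) / fact n"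
      by (intro divide_right_mono) auto
    also have "(fact n * B / s^n) / fact n = B / s^n" by simp
    also have "norm ((deriv ^^ n) (g x y) 0) / fact n = cmod (phi y y)"
    proof -
      have "phi y y = (deriv ^^ n) (g x y) 0 / fact n" unfolding y_def by (rule coeff)
      thus ?thesis by (simp add: norm_divide)
    qed
    finally have "cmod (phi y y) \<le> B / s^n" .
    moreover have "(norm y)^2 \<le> cmod (phi y y)"
      using Re_phi_self[of y] abs_Re_le_cmod[of "phi y y"] by simp
    ultimately have "norm y * norm y \<le> (2 * Rm * (1/s)^n * norm x) * norm y"
      by (simp add: B_def power2_eq_square field_simps)
    moreover have nn: "0 \<le> 2 * Rm * (1/s)^n * norm x" using Rm s by simp
    ultimately have "norm y \<le> 2 * Rm * (1/s)^n * norm x"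
      by (cases "norm y = 0") (auto intro: mult_right_le_imp_le)
    thus ?thesis by (simp add: y_def)
  qed
  show ?thesis
  proof (intro exI conjI allI)
    show "0 < 1/s" "1/s < 1" using s by auto
    fix n show "norm (bpow E n) \<le> 2 * Rm * (1/s)^n"
      using est Rm s by (intro norm_blinfun_bound) auto
  qed
qed

lemma sa_adj_sym: "sa ((adj A o\<^sub>L B) + (adj B o\<^sub>L A))"
  unfolding sa_def
  by (simp add: blinfun.add_left inner_add_left inner_add_right inner_adj' flip: inner_adj)

lemma sa_adj_self: "sa (adj A o\<^sub>L A)"
  unfolding sa_def by (simp add: inner_adj' flip: inner_adj)

lemma amgm: fixes a b P e :: real assumes "0 < e" shows "2 * P * a * b \<le> e * a^2 + (P^2 / e) * b^2"
proof -
  have "0 \<le> (e * a - P * b)^2 / e" using assms by simp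
  also have "(e * a - P * b)^2 / e = e * a^2 + (P^2 / e) * b^2 - 2 * P * a * b"
    using assms by (simp add: power2_eq_square field_simps)
  finally show ?thesis by simp
qed

lemma main_contraction:
  fixes C E :: "'a::complex_hilbert \<Rightarrow>\<^sub>L 'a"
  assumes Cb: "C \<in> bop" and Eb: "E \<in> bop" and nC: "norm C \<le> 1" and EC: "E o\<^sub>L C = 0"
    and \<rho>: "0 < \<rho>" "\<rho> < 1" and K: "0 \<le> K" and dec: "\<And>n. norm (bpow E n) \<le> K * \<rho>^n"
  shows "\<exists>W V. W \<in> bop \<and> V \<in> bop \<and> W o\<^sub>L V = id_blinfun \<and> V o\<^sub>L W = id_blinfun \<and>
           norm (W o\<^sub>L (C + E) o\<^sub>L V) \<le> 1"
proof -
  define T where "T = C + E"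
  have Tb: "T \<in> bop" using Cb Eb by (simp add: T_def)
  have ECx: "blinfun_apply E (blinfun_apply C x) = 0" for x
    using EC by (metis blinfun_apply_blinfun_compose zero_blinfun.rep_eq)
  have ETx: "blinfun_apply E (blinfun_apply T x) = blinfun_apply E (blinfun_apply E x)" for x
    by (simp add: T_def blinfun.add_left blinfun.add_right ECx)
  have EnT: "blinfun_apply (bpow E (Suc n)) (blinfun_apply T x) = blinfun_apply (bpow E (Suc (Suc n))) x" for n x
    by (simp only: bpow_apply_Suc' ETx)
  have ETn: "blinfun_apply E (blinfun_apply (bpow T n) x) = blinfun_apply (bpow E (Suc n)) x" for n x
  proof (induction n arbitrary: x)
    case 0 thus ?case by simp
  next
    case (Suc n)
    have "blinfun_apply E (blinfun_apply (bpow T (Suc n)) x) = blinfun_apply E (blinfun_apply (bpow T n) (blinfun_apply T x))"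
      by (simp only: bpow_apply_Suc')
    also have "\<dots> = blinfun_apply (bpow E (Suc n)) (blinfun_apply T x)" by (rule Suc)
    also have "\<dots> = blinfun_apply (bpow E (Suc (Suc n))) x" by (rule EnT)
    finally show ?case .
  qed
  have decx: "norm (blinfun_apply (bpow E n) x) \<le> K * \<rho>^n * norm x" for n x
    using norm_blinfun[of "bpow E n" x] dec[of n] by (meson mult_right_mono norm_ge_zero order_trans)
  define P where "P = 1 + K / (1 - \<rho>)"
  have P: "1 \<le> P" using K \<rho> by (simp add: P_def)
  have Tpow: "norm (blinfun_apply (bpow T n) x) \<le> (1 + K * (1 - \<rho>^n) / (1 - \<rho>)) * norm x" for n x
  proof (induction n)
    case 0 thus ?case by simp
  next
    case (Suc n)
    have "norm (blinfun_apply (bpow T (Suc n)) x)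
        \<le> norm (blinfun_apply C (blinfun_apply (bpow T n) x)) + norm (blinfun_apply E (blinfun_apply (bpow T n) x))"
      by (simp add: T_def blinfun.add_left norm_triangle_ineq)
    also have "norm (blinfun_apply C (blinfun_apply (bpow T n) x)) \<le> norm (blinfun_apply (bpow T n) x)"
      using norm_blinfun[of C "blinfun_apply (bpow T n) x"] nC
      by (meson mult_left_le_one_le norm_ge_zero order_trans)
    also have "norm (blinfun_apply E (blinfun_apply (bpow T n) x)) \<le> K * \<rho>^Suc n * norm x"
      unfolding ETn by (rule decx)
    finally have "norm (blinfun_apply (bpow T (Suc n)) x) \<le> (1 + K * (1 - \<rho>^n) / (1 - \<rho>)) * norm x + K * \<rho>^Suc n * norm x"
      using Suc by linarith
    also have "\<dots> \<le> (1 + K * (1 - \<rho>^Suc n) / (1 - \<rho>)) * norm x"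
    proof -
      have "K * \<rho>^Suc n \<le> K * \<rho>^n" using K \<rho> by (intro mult_left_mono power_decreasing) auto
      moreover have "(1 + K * (1 - \<rho>^Suc n) / (1 - \<rho>)) = (1 + K * (1 - \<rho>^n) / (1 - \<rho>)) + K * \<rho>^n"
        using \<rho> by (simp add: field_simps)
      ultimately have "(1 + K * (1 - \<rho>^n) / (1 - \<rho>)) + K * \<rho>^Suc n \<le> (1 + K * (1 - \<rho>^Suc n) / (1 - \<rho>))"
        by linarith
      thus ?thesis by (metis distrib_right mult_right_mono norm_ge_zero)
    qed
    finally show ?case .
  qed
  have Tbd: "norm (blinfun_apply (bpow T n) x) \<le> P * norm x" for n x
  proof -
    have "K * (1 - \<rho>^n) / (1 - \<rho>) \<le> K / (1 - \<rho>)"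
      using K \<rho> by (intro divide_right_mono mult_left_le) (auto simp: zero_le_power)
    hence "(1 + K * (1 - \<rho>^n) / (1 - \<rho>)) * norm x \<le> P * norm x"
      unfolding P_def by (intro mult_right_mono) auto
    thus ?thesis using Tpow[of n x] by linarith
  qed
  have nTn: "norm (bpow T n) \<le> P" for n
    using Tbd P by (intro norm_blinfun_bound) auto
  \<comment> \<open>the Lyapunov operator\<close>
  define eps where "eps k = (1 - \<rho>) * \<rho>^k / 2" for k
  have eps: "0 < eps k" for k using \<rho> by (simp add: eps_def)
  define b where "b k = P^2 / eps k" for k
  have b0: "0 \<le> b k" for k using eps[of k] by (simp add: b_def)
  have bmono: "b k \<le> b (Suc k)" for k
  proof -
    have "eps (Suc k) \<le> eps k" using \<rho> by (simp add: eps_def mult_left_le_one_le)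
    thus ?thesis unfolding b_def using eps by (intro divide_left_mono) auto
  qed
  define D where "D k = ((adj (bpow T (Suc k)) o\<^sub>L bpow E (Suc k)) + (adj (bpow E (Suc k)) o\<^sub>L bpow T (Suc k)))
      + b k *\<^sub>R (adj (bpow E (Suc k)) o\<^sub>L bpow E (Suc k))" for k
  define c0 where "c0 = 2 * P * K + 2 * P^2 * K^2 / (1 - \<rho>)"
  have nD: "norm (D k) \<le> c0 * \<rho>^Suc k" for k
  proof -
    have nT: "norm (bpow T (Suc k)) \<le> P" by (rule nTn)
    have nE: "norm (bpow E (Suc k)) \<le> K * \<rho>^Suc k" by (rule dec)
    have nE0: "0 \<le> norm (bpow E (Suc k))" by simp
    have n1: "norm (adj (bpow T (Suc k)) o\<^sub>L bpow E (Suc k)) \<le> P * (K * \<rho>^Suc k)"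
    proof -
      have "norm (adj (bpow T (Suc k)) o\<^sub>L bpow E (Suc k)) \<le> norm (adj (bpow T (Suc k))) * norm (bpow E (Suc k))"
        by (rule norm_blinfun_compose)
      also have "\<dots> \<le> P * (K * \<rho>^Suc k)"
        using norm_adj[of "bpow T (Suc k)"] nT nE P by (intro mult_mono) auto
      finally show ?thesis .
    qed
    have n2: "norm (adj (bpow E (Suc k)) o\<^sub>L bpow T (Suc k)) \<le> (K * \<rho>^Suc k) * P"
    proof -
      have "norm (adj (bpow E (Suc k)) o\<^sub>L bpow T (Suc k)) \<le> norm (adj (bpow E (Suc k))) * norm (bpow T (Suc k))"
        by (rule norm_blinfun_compose)
      also have "\<dots> \<le> (K * \<rho>^Suc k) * P"
        using norm_adj[of "bpow E (Suc k)"] nT nE K \<rho> by (intro mult_mono) auto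
      finally show ?thesis .
    qed
    have n3: "norm (adj (bpow E (Suc k)) o\<^sub>L bpow E (Suc k)) \<le> (K * \<rho>^Suc k) * (K * \<rho>^Suc k)"
    proof -
      have "norm (adj (bpow E (Suc k)) o\<^sub>L bpow E (Suc k)) \<le> norm (adj (bpow E (Suc k))) * norm (bpow E (Suc k))"
        by (rule norm_blinfun_compose)
      also have "\<dots> \<le> (K * \<rho>^Suc k) * (K * \<rho>^Suc k)"
        using norm_adj[of "bpow E (Suc k)"] nE K \<rho> by (intro mult_mono) auto
      finally show ?thesis .
    qed
    have "norm (D k) \<le> P * (K * \<rho>^Suc k) + (K * \<rho>^Suc k) * P + b k * ((K * \<rho>^Suc k) * (K * \<rho>^Suc k))"
    proof -
      have "norm (D k) \<le> norm (adj (bpow T (Suc k)) o\<^sub>L bpow E (Suc k)) + norm (adj (bpow E (Suc k)) o\<^sub>L bpow T (Suc k))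
           + b k * norm (adj (bpow E (Suc k)) o\<^sub>L bpow E (Suc k))"
      proof -
        let ?X = "adj (bpow T (Suc k)) o\<^sub>L bpow E (Suc k)"
        let ?Y = "adj (bpow E (Suc k)) o\<^sub>L bpow T (Suc k)"
        let ?Z = "adj (bpow E (Suc k)) o\<^sub>L bpow E (Suc k)"
        have "norm (D k) \<le> norm (?X + ?Y) + norm (b k *\<^sub>R ?Z)" unfolding D_def by (rule norm_triangle_ineq)
        also have "norm (?X + ?Y) \<le> norm ?X + norm ?Y" by (rule norm_triangle_ineq)
        also have "norm (b k *\<^sub>R ?Z) = b k * norm ?Z" using b0[of k] by simp
        finally show ?thesis by simp
      qed
      also have "\<dots> \<le> P * (K * \<rho>^Suc k) + (K * \<rho>^Suc k) * P + b k * ((K * \<rho>^Suc k) * (K * \<rho>^Suc k))"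
        using n1 n2 n3 b0[of k] by (intro add_mono mult_left_mono) auto
      finally show ?thesis .
    qed
    also have "b k * ((K * \<rho>^Suc k) * (K * \<rho>^Suc k)) = (2 * P^2 * K^2 / (1 - \<rho>)) * \<rho>^Suc k * \<rho>"
      using \<rho> by (simp add: b_def eps_def power2_eq_square field_simps)
    also have "\<dots> \<le> (2 * P^2 * K^2 / (1 - \<rho>)) * \<rho>^Suc k"
      using \<rho> by (intro mult_left_le) (auto intro!: mult_nonneg_nonneg divide_nonneg_pos)
    finally show ?thesis by (simp add: c0_def algebra_simps)
  qed
  have sD: "summable (\<lambda>k. norm (D k))"
  proof (rule summable_comparison_test[OF _ summable_mult[OF summable_geometric[of \<rho>], of "c0 * \<rho>"]])
    show "\<exists>N. \<forall>n\<ge>N. norm (norm (D n)) \<le> c0 * \<rho> * \<rho> ^ n" using nD by (auto simp: algebra_simps)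
  qed (use \<rho> in auto)
  define G where "G = id_blinfun + (\<Sum>k. D k)"
  have Db: "D k \<in> bop" for k using Tb Eb by (simp add: D_def bop_adj)
  have Dsa: "sa (D k)" for k unfolding D_def by (intro sa_add sa_adj_sym sa_scaleR sa_adj_self)
  have Gb: "G \<in> bop" unfolding G_def using Db by (simp add: bop_suminf summable_norm_cancel[OF sD])
  have Gsa: "sa G" unfolding G_def by (intro sa_add sa_id sa_suminf summable_norm_cancel[OF sD] Dsa)
  define f where "f k x = 2 * inner (blinfun_apply (bpow T (Suc k)) x) (blinfun_apply (bpow E (Suc k)) x)
      + b k * (norm (blinfun_apply (bpow E (Suc k)) x))^2" for k x
  have Df: "inner (blinfun_apply (D k) x) x = f k x" for k x
  proof -
    define tn where "tn = blinfun_apply (bpow T (Suc k)) x"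
    define en where "en = blinfun_apply (bpow E (Suc k)) x"
    have "inner (blinfun_apply (D k) x) x = inner en tn + inner tn en + b k * inner en en"
      unfolding D_def tn_def en_def
      by (simp only: blinfun.add_left blinfun.scaleR_left blinfun_apply_blinfun_compose inner_add_left
          inner_scaleR_left inner_adj')
    also have "\<dots> = f k x" unfolding f_def tn_def[symmetric] en_def[symmetric]
      by (simp add: inner_commute[of en tn] power2_norm_eq_inner)
    finally show ?thesis .
  qed
  have Gsums: "(\<lambda>k. f k x) sums (inner (blinfun_apply G x) x - (norm x)^2)" for x
  proof -
    have "(\<lambda>k. inner (blinfun_apply (D k) x) x) sums inner (blinfun_apply (\<Sum>k. D k) x) x"
      by (rule sums_inner_apply[OF summable_norm_cancel[OF sD]])
    thus ?thesis by (simp add: Df G_def blinfun.add_left inner_add_left power2_norm_eq_inner)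
  qed
  have flow: "- (eps k * (norm x)^2) \<le> f k x" for k x
  proof -
    define a1 where "a1 = norm x"
    define b1 where "b1 = norm (blinfun_apply (bpow E (Suc k)) x)"
    have "\<bar>inner (blinfun_apply (bpow T (Suc k)) x) (blinfun_apply (bpow E (Suc k)) x)\<bar>
       \<le> norm (blinfun_apply (bpow T (Suc k)) x) * b1" unfolding b1_def by (rule Cauchy_Schwarz_ineq2)
    also have "\<dots> \<le> P * a1 * b1" unfolding a1_def
      by (rule mult_right_mono[OF Tbd[of "Suc k" x]]) (simp add: b1_def)
    finally have i1: "\<bar>inner (blinfun_apply (bpow T (Suc k)) x) (blinfun_apply (bpow E (Suc k)) x)\<bar> \<le> P * a1 * b1" .
    have "2 * P * a1 * b1 \<le> eps k * a1^2 + (P^2 / eps k) * b1^2" by (rule amgm[OF eps])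
    thus ?thesis using i1 unfolding f_def b_def a1_def b1_def by (simp add: abs_le_iff)
  qed
  have seps: "(\<lambda>k. eps k * (norm x)^2) sums ((norm x)^2 / 2)" for x
  proof -
    have "(\<lambda>k. \<rho>^k) sums (1 / (1 - \<rho>))" using \<rho> by (intro geometric_sums) auto
    hence S: "(\<lambda>k. ((1 - \<rho>) / 2 * (norm x)^2) * \<rho>^k) sums (((1 - \<rho>) / 2 * (norm x)^2) * (1 / (1 - \<rho>)))"
      by (rule sums_mult)
    have eq: "((1 - \<rho>) / 2 * (norm x)^2) * (1 / (1 - \<rho>)) = (norm x)^2 / 2"
    proof -
      have ne: "1 - \<rho> \<noteq> 0" "2 - 2 * \<rho> \<noteq> 0" using \<rho> by auto
      thus ?thesis by (simp add: field_simps)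
    qed
    have fe: "(\<lambda>k. eps k * (norm x)^2) = (\<lambda>k. ((1 - \<rho>) / 2 * (norm x)^2) * \<rho>^k)"
      by (rule ext) (simp add: eps_def field_simps)
    show ?thesis unfolding fe using S unfolding eq .
  qed
  have Glow: "(1/2) * (norm x)^2 \<le> inner (blinfun_apply G x) x" for x
  proof -
    have "- ((norm x)^2 / 2) \<le> inner (blinfun_apply G x) x - (norm x)^2"
    proof -
      have "(\<lambda>k. - (eps k * (norm x)^2)) sums (- ((norm x)^2 / 2))" using seps[of x] by (rule sums_minus)
      moreover have fl: "\<And>k. - (eps k * (norm x)^2) \<le> f k x" by (rule flow)
      ultimately show ?thesis using sums_le[OF fl _ Gsums[of x]] by blast
    qed
    thus ?thesis by simp
  qed
  have Gdec: "inner (blinfun_apply G (blinfun_apply T x)) (blinfun_apply T x) \<le> inner (blinfun_apply G x) x" for x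
  proof -
    define y where "y = blinfun_apply T x"
    have fy: "f k y = 2 * inner (blinfun_apply (bpow T (Suc (Suc k))) x) (blinfun_apply (bpow E (Suc (Suc k))) x)
      + b k * (norm (blinfun_apply (bpow E (Suc (Suc k))) x))^2" for k
      unfolding f_def y_def by (simp only: EnT bpow_apply_Suc'[symmetric])
    have le: "f k y \<le> f (Suc k) x" for k
    proof -
      have "b k * (norm (blinfun_apply (bpow E (Suc (Suc k))) x))^2
          \<le> b (Suc k) * (norm (blinfun_apply (bpow E (Suc (Suc k))) x))^2"
        by (rule mult_right_mono[OF bmono]) simp
      hence "f k y \<le> 2 * inner (blinfun_apply (bpow T (Suc (Suc k))) x) (blinfun_apply (bpow E (Suc (Suc k))) x)
          + b (Suc k) * (norm (blinfun_apply (bpow E (Suc (Suc k))) x))^2"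
        unfolding fy by linarith
      thus ?thesis by (simp only: f_def)
    qed
    have s1: "(\<lambda>k. f k y) sums (inner (blinfun_apply G y) y - (norm y)^2)" by (rule Gsums)
    have s2: "(\<lambda>k. f (Suc k) x) sums (inner (blinfun_apply G x) x - (norm x)^2 - f 0 x)"
      using sums_Suc_iff[of "\<lambda>k. f k x"] Gsums[of x] by simp
    have "inner (blinfun_apply G y) y - (norm y)^2 \<le> inner (blinfun_apply G x) x - (norm x)^2 - f 0 x"
      by (rule sums_le[OF le s1 s2])
    moreover have "(norm y)^2 \<le> (norm x)^2 + f 0 x"
    proof -
      have Cx: "norm (blinfun_apply C x) \<le> norm x"
        using norm_blinfun[of C x] nC by (meson mult_left_le_one_le norm_ge_zero order_trans)
      have yC: "y - blinfun_apply E x = blinfun_apply C x" by (simp add: y_def T_def blinfun.add_left)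
      have "(norm y)^2 = (norm (y - blinfun_apply E x))^2 + 2 * inner y (blinfun_apply E x) - (norm (blinfun_apply E x))^2"
        by (simp add: power2_norm_eq_inner inner_diff_left inner_diff_right inner_commute)
      also have "(norm (y - blinfun_apply E x))^2 \<le> (norm x)^2" unfolding yC using Cx by (simp add: power_mono)
      finally have "(norm y)^2 \<le> (norm x)^2 + 2 * inner y (blinfun_apply E x) - (norm (blinfun_apply E x))^2" by linarith
      moreover have "f 0 x = 2 * inner y (blinfun_apply E x) + b 0 * (norm (blinfun_apply E x))^2"
        by (simp add: f_def y_def)
      moreover have "0 \<le> b 0 * (norm (blinfun_apply E x))^2" using b0[of 0] by simp
      moreover have "0 \<le> (norm (blinfun_apply E x))^2" by simp
      ultimately show ?thesis by linarith
    qed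
    ultimately show ?thesis unfolding y_def by linarith
  qed
  obtain W V where WV: "W \<in> bop" "V \<in> bop" "W o\<^sub>L V = id_blinfun" "V o\<^sub>L W = id_blinfun"
      "\<And>x. (norm (blinfun_apply W x))^2 = inner (blinfun_apply G x) x"
    using sqrt_op[OF Gb Gsa _ Glow] by auto
  show ?thesis
  proof (intro exI conjI)
    show "W \<in> bop" "V \<in> bop" "W o\<^sub>L V = id_blinfun" "V o\<^sub>L W = id_blinfun" using WV by auto
    show "norm (W o\<^sub>L (C + E) o\<^sub>L V) \<le> 1"
    proof (rule norm_blinfun_bound)
      fix y
      define z where "z = blinfun_apply V y"
      have Wz: "blinfun_apply W z = y" using WV(3) unfolding z_def by (metis blinfun_apply_blinfun_compose blinfun_apply_id_blinfun)
      have "(norm (blinfun_apply (W o\<^sub>L (C + E) o\<^sub>L V) y))^2 = inner (blinfun_apply G (blinfun_apply T z)) (blinfun_apply T z)"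
        by (simp add: WV(5) z_def T_def)
      also have "\<dots> \<le> inner (blinfun_apply G z) z" by (rule Gdec)
      also have "\<dots> = (norm y)^2" using WV(5)[of z] Wz by simp
      finally have "(norm (blinfun_apply (W o\<^sub>L (C + E) o\<^sub>L V) y))^2 \<le> (norm y)^2" .
      hence "norm (blinfun_apply (W o\<^sub>L (C + E) o\<^sub>L V) y) \<le> norm y"
        by (rule power2_le_imp_le) simp
      thus "norm (blinfun_apply (W o\<^sub>L (C + E) o\<^sub>L V) y) \<le> 1 * norm y" by simp
    qed simp
  qed
qed

theorem theorem3p2:
  fixes C E :: "'a::complex_hilbert \<Rightarrow>\<^sub>L 'a"
  assumes "C \<in> bop" and "similar_to_contraction C"
    and "E \<in> bop" and "spectral_radius E < 1"
    and "E o\<^sub>L C = 0"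
  shows "similar_to_contraction (C + E)"
proof -
  obtain L0 M0 where L0: "invertible_bop L0" and M0: "M0 \<in> bop" "M0 o\<^sub>L L0 = id_blinfun"
      "L0 o\<^sub>L M0 = id_blinfun" "norm (M0 o\<^sub>L C o\<^sub>L L0) \<le> 1"
    using assms(2) unfolding similar_to_contraction_def by blast
  have L0b: "L0 \<in> bop" using L0 by (simp add: invertible_bop_def)
  obtain K \<rho> where K\<rho>: "0 < \<rho>" "\<rho> < 1" "\<And>n. norm (bpow E n) \<le> K * \<rho>^n"
    using spectral_decay[OF assms(3,4)] by blast
  have LMz: "blinfun_apply L0 (blinfun_apply M0 z) = z" for z
    using M0(3) by (metis blinfun_apply_blinfun_compose blinfun_apply_id_blinfun)
  have MLz: "blinfun_apply M0 (blinfun_apply L0 z) = z" for z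
    using M0(2) by (metis blinfun_apply_blinfun_compose blinfun_apply_id_blinfun)
  have ECz: "blinfun_apply E (blinfun_apply C z) = 0" for z
    using assms(5) by (metis blinfun_apply_blinfun_compose zero_blinfun.rep_eq)
  define K' where "K' = norm M0 * norm L0 * max K 0"
  have K': "0 \<le> K'" by (simp add: K'_def)
  define C0 where "C0 = M0 o\<^sub>L C o\<^sub>L L0"
  define E0 where "E0 = M0 o\<^sub>L E o\<^sub>L L0"
  have C0b: "C0 \<in> bop" using M0 L0b assms(1) by (simp add: C0_def)
  have E0b: "E0 \<in> bop" using M0 L0b assms(3) by (simp add: E0_def)
  have E0pow: "bpow E0 n = M0 o\<^sub>L bpow E n o\<^sub>L L0" for n
  proof (induction n)
    case 0 show ?case using M0(2) by simp
  next
    case (Suc n)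
    show ?case by (rule blinfun_eqI) (simp add: Suc; simp add: E0_def LMz)
  qed
  have dec: "norm (bpow E0 n) \<le> K' * \<rho>^n" for n
  proof -
    have "norm (bpow E0 n) \<le> norm M0 * norm (bpow E n) * norm L0" unfolding E0pow by (rule norm_comp3)
    also have "\<dots> \<le> norm M0 * (max K 0 * \<rho>^n) * norm L0"
    proof -
      have "norm (bpow E n) \<le> max K 0 * \<rho>^n"
        using K\<rho>(3)[of n] K\<rho>(1) by (meson max.cobounded1 mult_right_mono order_trans zero_le_power less_imp_le)
      thus ?thesis by (intro mult_right_mono mult_left_mono) auto
    qed
    also have "\<dots> = K' * \<rho>^n" by (simp add: K'_def)
    finally show ?thesis .
  qed
  have E0C0: "E0 o\<^sub>L C0 = 0"
    by (rule blinfun_eqI) (simp add: E0_def C0_def LMz ECz blinfun.zero_right)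
  obtain W V where WV: "W \<in> bop" "V \<in> bop" "W o\<^sub>L V = id_blinfun" "V o\<^sub>L W = id_blinfun"
      "norm (W o\<^sub>L (C0 + E0) o\<^sub>L V) \<le> 1"
    using main_contraction[OF C0b E0b _ E0C0 K\<rho>(1,2) K' dec] M0(4) by (auto simp: C0_def)
  have VW: "blinfun_apply V (blinfun_apply W z) = z" for z
    using WV(4) by (metis blinfun_apply_blinfun_compose blinfun_apply_id_blinfun)
  have WV': "blinfun_apply W (blinfun_apply V z) = z" for z
    using WV(3) by (metis blinfun_apply_blinfun_compose blinfun_apply_id_blinfun)
  define L where "L = L0 o\<^sub>L V"
  define M where "M = W o\<^sub>L M0"
  have Lb: "L \<in> bop" and Mb: "M \<in> bop" using L0b WV M0 by (simp_all add: L_def M_def)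
  have MLid: "M o\<^sub>L L = id_blinfun" by (rule blinfun_eqI) (simp add: M_def L_def MLz WV')
  have LMid: "L o\<^sub>L M = id_blinfun" by (rule blinfun_eqI) (simp add: M_def L_def LMz VW)
  have eq: "M o\<^sub>L (C + E) o\<^sub>L L = W o\<^sub>L (C0 + E0) o\<^sub>L V"
    by (rule blinfun_eqI) (simp add: M_def L_def C0_def E0_def blinfun.add_left blinfun.add_right)
  show ?thesis unfolding similar_to_contraction_def
  proof (intro exI conjI)
    show "invertible_bop L" unfolding invertible_bop_def using Lb Mb MLid LMid by blast
    show "M \<in> bop" "M o\<^sub>L L = id_blinfun" "L o\<^sub>L M = id_blinfun" by (fact Mb MLid LMid)+
    show "norm (M o\<^sub>L (C + E) o\<^sub>L L) \<le> 1" unfolding eq by (rule WV(5))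
  qed
qed

end
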